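(* There is an absolute constant $\kappa_1>0$ such that for every constant $C_0>0$ there is $R_0$ with the following property. Let $R\ge R_0$, let $q\in\mathbb{R}$ with $0<|q|\le C_0$, and let $S,T\subset[0,R^{-1/5}]$ be arbitrary finite sets of $\frac1{\sqrt R}$-separated points (i.e. distinct points of $S$ are at distance $\ge R^{-1/2}$, and likewise for $T$). Then $$\Big|\sum_{s\in S,\,t\in T}e^{iR(st+qs^2t^2)}\Big|<R^{\frac35-\kappa_1}|q|^{-1}.$$ *)

theory Defs
  imports "HOL-Analysis.Analysis"
begin

definition separated :: "real \<Rightarrow> real set \<Rightarrow> bool" where
  "separated d A \<longleftrightarrow> (\<forall>x\<in>A. \<forall>y\<in>A. x \<noteq> y \<longrightarrow> \<bar>x - y\<bar> \<ge> d)"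

end

theory Submission
  imports Defs "HOL-Real_Asymp.Real_Asymp"
begin


lemma norm_cis_diff: "norm (cis a - cis b) \<le> \<bar>a - b\<bar>"
proof -
  have e: "cis a - cis b = cis b * (cis (a - b) - 1)"
    by (simp add: algebra_simps cis_mult)
  have "(norm (cis (a - b) - 1))\<^sup>2 = (cos (a-b) - 1)\<^sup>2 + (sin (a-b))\<^sup>2"
    by (simp add: cmod_def)
  also have "\<dots> = 2 - 2 * cos (a - b)"
    using sin_cos_squared_add[of "a-b"] by (simp add: power2_eq_square algebra_simps)
  also have "cos (a - b) = 1 - 2 * (sin ((a-b)/2))\<^sup>2"
  proof -
    have h: "2 * ((a-b)/2) = a - b" by simp
    have "cos (a - b) = cos (2 * ((a-b)/2))" by (simp only: h)
    thus ?thesis by (simp only: cos_double_sin)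
  qed
  also have "2 - 2 * (1 - 2 * (sin ((a-b)/2))\<^sup>2) = 4 * (sin ((a-b)/2))\<^sup>2" by simp
  also have "\<dots> \<le> 4 * ((a-b)/2)\<^sup>2"
  proof -
    have "(sin ((a-b)/2))\<^sup>2 \<le> ((a-b)/2)\<^sup>2"
      using abs_sin_x_le_abs_x[of "(a-b)/2"] abs_le_square_iff by blast
    thus ?thesis by simp
  qed
  also have "\<dots> = \<bar>a - b\<bar>\<^sup>2" by (simp add: power2_eq_square field_simps)
  finally have "norm (cis (a - b) - 1) \<le> \<bar>a - b\<bar>"
    using abs_le_square_iff by (metis abs_norm_cancel abs_abs)
  thus ?thesis by (simp add: e norm_mult)
qed

lemma sum_cis_ortho:
  fixes P :: nat and d :: int
  assumes "P > 0"
  shows "(\<Sum>r<P. cis (2 * pi * real r * of_int d / real P)) = (if int P dvd d then of_nat P else 0)"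
proof -
  define w where "w = cis (2 * pi * of_int d / real P)"
  have pw: "cis (2 * pi * real r * of_int d / real P) = w ^ r" for r
  proof -
    have "w ^ r = cis (real r * (2 * pi * of_int d / real P))" unfolding w_def by (rule Complex.DeMoivre)
    also have "real r * (2 * pi * of_int d / real P) = 2 * pi * real r * of_int d / real P" by simp
    finally show ?thesis by simp
  qed
  have wP: "w ^ P = 1"
  proof -
    have "w ^ P = cis (real P * (2 * pi * of_int d / real P))" unfolding w_def by (rule Complex.DeMoivre)
    also have "real P * (2 * pi * of_int d / real P) = 2 * pi * of_int d" using assms by simp
    also have "cis (2 * pi * of_int d) = 1" by (rule cis_multiple_2pi) simp
    finally show ?thesis .
  qed
  show ?thesis
  proof (cases "int P dvd d")
    case True
    then obtain k where k: "d = int P * k" by blast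
    have e: "2 * pi * of_int d / real P = 2 * pi * of_int k" using assms by (simp add: k)
    have "w = cis (2 * pi * of_int k)" unfolding w_def by (simp only: e)
    also have "\<dots> = 1" by (rule cis_multiple_2pi) simp
    finally show ?thesis using True by (simp add: pw)
  next
    case False
    have "w \<noteq> 1"
    proof
      assume "w = 1"
      then obtain k :: int where k: "2 * pi * of_int d / real P = 2 * pi * of_int k"
        by (auto simp: w_def complex_eq_iff cos_one_2pi_int)
      hence "of_int d = real P * of_int k" using assms by (simp add: field_simps)
      hence "d = int P * k" by (metis of_int_eq_iff of_int_mult of_int_of_nat_eq)
      thus False using False by auto
    qed
    hence "(\<Sum>r<P. w ^ r) = 0" using wP by (simp add: geometric_sum)
    thus ?thesis using False by (simp add: pw)
  qed
qed

lemma card_sep_interval: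
  fixes A :: "real set"
  assumes "finite A" "\<delta> > 0" "separated \<delta> A"
  shows "\<forall>a b. a \<le> b \<longrightarrow> A \<subseteq> {a..b} \<longrightarrow> real (card A) \<le> (b - a) / \<delta> + 1"
  using assms(1,3)
proof (induction A rule: finite_remove_induct)
  case empty
  then show ?case using assms(2) by auto
next
  case (remove A)
  show ?case
  proof (intro allI impI)
    fix a b assume ab: "a \<le> b" "A \<subseteq> {a..b}"
    define m where "m = Max A"
    have mA: "m \<in> A" using remove m_def by auto
    have sepA: "separated \<delta> A" using remove by auto
    have sep': "separated \<delta> (A - {m})" using sepA by (auto simp: separated_def)
    have sub: "A - {m} \<subseteq> {a..m - \<delta>}"
    proof
      fix x assume x: "x \<in> A - {m}"
      have "x \<le> m" using x remove m_def by auto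
      moreover have "\<bar>x - m\<bar> \<ge> \<delta>" using sepA x mA by (auto simp: separated_def)
      ultimately show "x \<in> {a..m-\<delta>}" using x ab by auto
    qed
    have c1: "card (A - {m}) = card A - 1" using mA remove(1) by (simp add: card_Diff_singleton)
    have c2: "card A > 0" using mA remove(1) card_gt_0_iff by blast
    have cardA: "card A = card (A - {m}) + 1" using c1 c2 by simp
    show "real (card A) \<le> (b - a) / \<delta> + 1"
    proof (cases "A - {m} = {}")
      case True
      hence "card A = 1" using cardA by (metis add_0 card.empty)
      thus ?thesis using ab assms(2) by simp
    next
      case False
      then obtain x where "x \<in> A - {m}" by auto
      hence am: "a \<le> m - \<delta>" using sub by auto
      have "real (card (A - {m})) \<le> (m - \<delta> - a) / \<delta> + 1"
        using remove.IH[OF mA sep'] am sub by blast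
      also have "\<dots> = (m - a) / \<delta>" using assms(2) by (simp add: field_simps)
      finally have "real (card A) \<le> (m - a)/\<delta> + 1" using cardA by simp
      also have "\<dots> \<le> (b - a)/\<delta> + 1"
      proof -
        have "m \<le> b" using mA ab by auto
        thus ?thesis using assms(2) by (simp add: divide_right_mono)
      qed
      finally show ?thesis .
    qed
  qed
qed




lemma cis_shift_int: "cis (x + 2 * pi * of_int k) = cis x"
proof -
  have "cis (2 * pi * of_int k) = 1" by (rule cis_multiple_2pi) simp
  thus ?thesis by (simp add: cis_mult[symmetric])
qed

lemma sum_prod_sep:
  fixes f g :: "'a \<Rightarrow> 'c::comm_semiring_0"
  shows "(\<Sum>r\<in>A \<times> B. f (fst r) * g (snd r)) = (\<Sum>a\<in>A. f a) * (\<Sum>b\<in>B. g b)"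
  unfolding sum_product sum.cartesian_product by (simp add: case_prod_unfold)

lemma lattice_bound:
  fixes I :: "'i set" and J :: "'j set" and m1 m2 :: "'i \<Rightarrow> int" and n1 n2 :: "'j \<Rightarrow> int"
    and P1 P2 :: nat
  assumes fI: "finite I" and fJ: "finite J" and P1: "P1 > 0" and P2: "P2 > 0"
  shows "(norm (\<Sum>i\<in>I. \<Sum>j\<in>J. cis (2 * pi * (of_int (m1 i * n1 j) / real P1 + of_int (m2 i * n2 j) / real P2))))\<^sup>2
    \<le> real (card {(i,i'). i \<in> I \<and> i' \<in> I \<and> m1 i mod int P1 = m1 i' mod int P1 \<and> m2 i mod int P2 = m2 i' mod int P2})
       * (real P1 * real P2)
       * real (card {(j,j'). j \<in> J \<and> j' \<in> J \<and> n1 j mod int P1 = n1 j' mod int P1 \<and> n2 j mod int P2 = n2 j' mod int P2})"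
proof -
  define g where "g i = (nat (m1 i mod int P1), nat (m2 i mod int P2))" for i
  define box where "box = {..<P1} \<times> {..<P2}"
  define F where "F r = (\<Sum>j\<in>J. cis (2 * pi * real (fst r) * of_int (n1 j) / real P1 + 2 * pi * real (snd r) * of_int (n2 j) / real P2))" for r
  define c where "c r = card {i \<in> I. g i = r}" for r
  have gbox: "g ` I \<subseteq> box" using P1 P2 by (auto simp: g_def box_def nat_less_iff)
  have fbox: "finite box" by (simp add: box_def)
  have Fg: "(\<Sum>j\<in>J. cis (2 * pi * (of_int (m1 i * n1 j) / real P1 + of_int (m2 i * n2 j) / real P2))) = F (g i)" for i
  proof -
    have "cis (2 * pi * (of_int (m1 i * n1 j) / real P1 + of_int (m2 i * n2 j) / real P2))
        = cis (2 * pi * real (fst (g i)) * of_int (n1 j) / real P1 + 2 * pi * real (snd (g i)) * of_int (n2 j) / real P2)" for j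
    proof -
      have a1: "real (nat (m1 i mod int P1)) = of_int (m1 i mod int P1)" using P1 by simp
      have a2: "real (nat (m2 i mod int P2)) = of_int (m2 i mod int P2)" using P2 by simp
      have d1: "m1 i = m1 i mod int P1 + int P1 * (m1 i div int P1)" by simp
      have d2: "m2 i = m2 i mod int P2 + int P2 * (m2 i div int P2)" by simp
      have "2 * pi * (of_int (m1 i * n1 j) / real P1 + of_int (m2 i * n2 j) / real P2)
          = (2 * pi * real (fst (g i)) * of_int (n1 j) / real P1 + 2 * pi * real (snd (g i)) * of_int (n2 j) / real P2)
            + 2 * pi * of_int ((m1 i div int P1) * n1 j + (m2 i div int P2) * n2 j)"
      proof -
        have "of_int (m1 i * n1 j) / real P1 = of_int (m1 i mod int P1) * of_int (n1 j) / real P1 + of_int ((m1 i div int P1) * n1 j)"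
          
        proof -
          have dr: "real_of_int (m1 i) = of_int (m1 i mod int P1) + real P1 * of_int (m1 i div int P1)"
            by (metis d1 of_int_add of_int_mult of_int_of_nat_eq)
          show ?thesis using P1 by (simp add: dr field_simps)
        qed
        moreover have "of_int (m2 i * n2 j) / real P2 = of_int (m2 i mod int P2) * of_int (n2 j) / real P2 + of_int ((m2 i div int P2) * n2 j)"
          
        proof -
          have dr: "real_of_int (m2 i) = of_int (m2 i mod int P2) + real P2 * of_int (m2 i div int P2)"
            by (metis d2 of_int_add of_int_mult of_int_of_nat_eq)
          show ?thesis using P2 by (simp add: dr field_simps)
        qed
        ultimately show ?thesis by (simp add: g_def a1 a2 field_simps)
      qed
      thus ?thesis by (simp only: cis_shift_int)
    qed
    thus ?thesis by (simp add: F_def)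
  qed
  have S1: "(\<Sum>i\<in>I. F (g i)) = (\<Sum>r\<in>box. of_nat (c r) * F r)"
  proof -
    have "(\<Sum>i\<in>I. F (g i)) = (\<Sum>r\<in>box. \<Sum>i\<in>{x. x \<in> I \<and> g x = r}. F (g i))"
      by (rule sum.group[OF fI fbox gbox, symmetric])
    also have "\<dots> = (\<Sum>r\<in>box. of_nat (c r) * F r)"
      by (intro sum.cong refl) (simp add: c_def)
    finally show ?thesis .
  qed
  have S2: "(\<Sum>r\<in>box. (real (c r))\<^sup>2) = real (card {(i,i'). i \<in> I \<and> i' \<in> I \<and> g i = g i'})"
  proof -
    have "(\<Sum>r\<in>box. (real (c r))\<^sup>2) = (\<Sum>r\<in>box. \<Sum>i\<in>{x. x \<in> I \<and> g x = r}. real (c (g i)))"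
      by (intro sum.cong refl) (simp add: c_def power2_eq_square)
    also have "\<dots> = (\<Sum>i\<in>I. real (c (g i)))"
      by (rule sum.group[OF fI fbox gbox])
    also have "\<dots> = real (\<Sum>i\<in>I. card {i' \<in> I. g i' = g i})" by (simp add: c_def)
    also have "(\<Sum>i\<in>I. card {i' \<in> I. g i' = g i}) = card (SIGMA i:I. {i' \<in> I. g i' = g i})"
      using fI by simp
    also have "(SIGMA i:I. {i' \<in> I. g i' = g i}) = {(i,i'). i \<in> I \<and> i' \<in> I \<and> g i = g i'}" by auto
    finally show ?thesis .
  qed
  have gg: "g i = g i' \<longleftrightarrow> m1 i mod int P1 = m1 i' mod int P1 \<and> m2 i mod int P2 = m2 i' mod int P2" for i i'
    using P1 P2 by (simp add: g_def eq_nat_nat_iff)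
  have S3: "(\<Sum>r\<in>box. (norm (F r))\<^sup>2) = real P1 * real P2 *
      real (card {(j,j'). j \<in> J \<and> j' \<in> J \<and> n1 j mod int P1 = n1 j' mod int P1 \<and> n2 j mod int P2 = n2 j' mod int P2})"
  proof -
    define D where "D = {(j,j'). j \<in> J \<and> j' \<in> J \<and> n1 j mod int P1 = n1 j' mod int P1 \<and> n2 j mod int P2 = n2 j' mod int P2}"
    have "complex_of_real (\<Sum>r\<in>box. (norm (F r))\<^sup>2) = (\<Sum>r\<in>box. F r * cnj (F r))"
      unfolding of_real_sum by (simp only: complex_norm_square)
    also have "\<dots> = (\<Sum>r\<in>box. \<Sum>j\<in>J. \<Sum>j'\<in>J.
        cis (2 * pi * real (fst r) * of_int (n1 j - n1 j') / real P1) * cis (2 * pi * real (snd r) * of_int (n2 j - n2 j') / real P2))"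
    proof (intro sum.cong refl)
      fix r
      show "F r * cnj (F r) = (\<Sum>j\<in>J. \<Sum>j'\<in>J.
        cis (2 * pi * real (fst r) * of_int (n1 j - n1 j') / real P1) * cis (2 * pi * real (snd r) * of_int (n2 j - n2 j') / real P2))"
        unfolding F_def cnj_sum cis_cnj sum_product
      proof (intro sum.cong refl)
        fix j j' assume "j \<in> J" "j' \<in> J"
        show "cis (2 * pi * real (fst r) * of_int (n1 j) / real P1 + 2 * pi * real (snd r) * of_int (n2 j) / real P2) *
          cis (- (2 * pi * real (fst r) * of_int (n1 j') / real P1 + 2 * pi * real (snd r) * of_int (n2 j') / real P2)) =
          cis (2 * pi * real (fst r) * of_int (n1 j - n1 j') / real P1) * cis (2 * pi * real (snd r) * of_int (n2 j - n2 j') / real P2)"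
          unfolding cis_mult by (rule arg_cong[where f=cis]) (simp add: diff_divide_distrib algebra_simps)
      qed
    qed
    also have "\<dots> = (\<Sum>j\<in>J. \<Sum>j'\<in>J. \<Sum>r\<in>box.
        cis (2 * pi * real (fst r) * of_int (n1 j - n1 j') / real P1) * cis (2 * pi * real (snd r) * of_int (n2 j - n2 j') / real P2))"
      by (simp add: sum.swap[of _ box] sum.swap[of _ box J])
    also have "\<dots> = (\<Sum>j\<in>J. \<Sum>j'\<in>J. (if int P1 dvd (n1 j - n1 j') then of_nat P1 else 0) * (if int P2 dvd (n2 j - n2 j') then of_nat P2 else 0))"
    proof (intro sum.cong refl)
      fix j j'
      show "(\<Sum>r\<in>box. cis (2 * pi * real (fst r) * of_int (n1 j - n1 j') / real P1) * cis (2 * pi * real (snd r) * of_int (n2 j - n2 j') / real P2))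
         = (if int P1 dvd (n1 j - n1 j') then of_nat P1 else 0) * (if int P2 dvd (n2 j - n2 j') then of_nat P2 else 0)"
        unfolding box_def sum_prod_sep[where f="\<lambda>r1. cis (2 * pi * real r1 * of_int (n1 j - n1 j') / real P1)"
           and g="\<lambda>r2. cis (2 * pi * real r2 * of_int (n2 j - n2 j') / real P2)"]
        by (simp only: sum_cis_ortho[OF P1] sum_cis_ortho[OF P2])
    qed
    also have "\<dots> = (\<Sum>j\<in>J. \<Sum>j'\<in>J. (if (j,j') \<in> D then of_nat (P1 * P2) else 0))"
      by (intro sum.cong refl) (auto simp: D_def mod_eq_dvd_iff)
    also have "\<dots> = (\<Sum>p\<in>J \<times> J. (if p \<in> D then of_nat (P1 * P2) else 0))"
      by (simp add: sum.cartesian_product)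
    also have "\<dots> = of_nat (P1 * P2) * of_nat (card D)"
    proof -
      have "D \<subseteq> J \<times> J" by (auto simp: D_def)
      hence "D = (J \<times> J) \<inter> D" by auto
      thus ?thesis using fJ by (simp add: sum.If_cases)
    qed
    finally have "complex_of_real (\<Sum>r\<in>box. (norm (F r))\<^sup>2) = of_real (real P1 * real P2 * real (card D))"
      by simp
    thus ?thesis unfolding D_def of_real_eq_iff .
  qed
  have "norm (\<Sum>i\<in>I. \<Sum>j\<in>J. cis (2 * pi * (of_int (m1 i * n1 j) / real P1 + of_int (m2 i * n2 j) / real P2)))
      = norm (\<Sum>r\<in>box. of_nat (c r) * F r)" by (simp only: Fg S1)
  also have "\<dots> \<le> (\<Sum>r\<in>box. real (c r) * norm (F r))"
    by (rule order_trans[OF norm_sum]) (simp add: norm_mult)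
  finally have n1: "norm (\<Sum>i\<in>I. \<Sum>j\<in>J. cis (2 * pi * (of_int (m1 i * n1 j) / real P1 + of_int (m2 i * n2 j) / real P2)))
      \<le> (\<Sum>r\<in>box. real (c r) * norm (F r))" .
  have "(norm (\<Sum>i\<in>I. \<Sum>j\<in>J. cis (2 * pi * (of_int (m1 i * n1 j) / real P1 + of_int (m2 i * n2 j) / real P2))))\<^sup>2
      \<le> (\<Sum>r\<in>box. real (c r) * norm (F r))\<^sup>2"
    using n1 by (simp add: power_mono)
  also have "\<dots> \<le> (\<Sum>r\<in>box. (real (c r))\<^sup>2) * (\<Sum>r\<in>box. (norm (F r))\<^sup>2)"
    by (rule Cauchy_Schwarz_ineq_sum)
  also have "\<dots> = real (card {(i,i'). i \<in> I \<and> i' \<in> I \<and> g i = g i'}) * (real P1 * real P2 *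
      real (card {(j,j'). j \<in> J \<and> j' \<in> J \<and> n1 j mod int P1 = n1 j' mod int P1 \<and> n2 j mod int P2 = n2 j' mod int P2}))"
    by (simp add: S2 S3)
  finally show ?thesis by (simp add: gg mult_ac)
qed




lemma norm_sum_sq_le:
  fixes x :: "'i \<Rightarrow> complex"
  shows "(norm (\<Sum>i\<in>I. x i))\<^sup>2 \<le> real (card I) * (\<Sum>i\<in>I. (norm (x i))\<^sup>2)"
proof -
  have "(norm (\<Sum>i\<in>I. x i))\<^sup>2 \<le> (\<Sum>i\<in>I. 1 * norm (x i))\<^sup>2"
    by (simp add: norm_sum power_mono)
  also have "\<dots> \<le> (\<Sum>i\<in>I. 1\<^sup>2) * (\<Sum>i\<in>I. (norm (x i))\<^sup>2)"
    by (rule Cauchy_Schwarz_ineq_sum)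
  finally show ?thesis by simp
qed

lemma sum_norm_sq_complex:
  fixes x :: "'i \<Rightarrow> complex"
  shows "complex_of_real (\<Sum>i\<in>I. (norm (x i))\<^sup>2) = (\<Sum>i\<in>I. x i * cnj (x i))"
  unfolding of_real_sum by (simp only: complex_norm_square)

lemma sum3_swap:
  "(\<Sum>a\<in>A. \<Sum>b\<in>B. \<Sum>c\<in>C. f a b c) = (\<Sum>b\<in>B. \<Sum>c\<in>C. \<Sum>a\<in>A. f a b c)"
proof -
  have "(\<Sum>a\<in>A. \<Sum>b\<in>B. \<Sum>c\<in>C. f a b c) = (\<Sum>b\<in>B. \<Sum>a\<in>A. \<Sum>c\<in>C. f a b c)"
    by (rule sum.swap)
  also have "\<dots> = (\<Sum>b\<in>B. \<Sum>c\<in>C. \<Sum>a\<in>A. f a b c)"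
    by (rule sum.cong[OF refl], rule sum.swap)
  finally show ?thesis .
qed

lemma double_CS:
  fixes c :: "'a \<Rightarrow> 'b \<Rightarrow> complex"
  assumes fS: "finite S" and fT: "finite T"
  shows "(norm (\<Sum>s\<in>S. \<Sum>t\<in>T. c s t))^4 \<le> (real (card S))\<^sup>2 * (real (card T))\<^sup>2 *
     norm (\<Sum>s\<in>S. \<Sum>s'\<in>S. \<Sum>t\<in>T. \<Sum>t'\<in>T. c s t * cnj (c s t') * cnj (c s' t) * c s' t')"
proof -
  define A where "A t t' = (\<Sum>s\<in>S. c s t * cnj (c s t'))" for t t'
  have e1: "complex_of_real (\<Sum>s\<in>S. (norm (\<Sum>t\<in>T. c s t))\<^sup>2) = (\<Sum>t\<in>T. \<Sum>t'\<in>T. A t t')"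
    unfolding sum_norm_sq_complex A_def cnj_sum sum_product
    by (simp add: sum.swap[of _ S])
  have n1: "(norm (\<Sum>s\<in>S. \<Sum>t\<in>T. c s t))\<^sup>2 \<le> real (card S) * norm (\<Sum>t\<in>T. \<Sum>t'\<in>T. A t t')"
  proof -
    have "(norm (\<Sum>s\<in>S. \<Sum>t\<in>T. c s t))\<^sup>2 \<le> real (card S) * (\<Sum>s\<in>S. (norm (\<Sum>t\<in>T. c s t))\<^sup>2)"
      by (rule norm_sum_sq_le)
    also have "(\<Sum>s\<in>S. (norm (\<Sum>t\<in>T. c s t))\<^sup>2) = norm (\<Sum>t\<in>T. \<Sum>t'\<in>T. A t t')"
    proof -
      have "norm (\<Sum>t\<in>T. \<Sum>t'\<in>T. A t t') = norm (complex_of_real (\<Sum>s\<in>S. (norm (\<Sum>t\<in>T. c s t))\<^sup>2))"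
        by (simp only: e1)
      also have "\<dots> = (\<Sum>s\<in>S. (norm (\<Sum>t\<in>T. c s t))\<^sup>2)"
        unfolding norm_of_real by (rule abs_of_nonneg) (simp add: sum_nonneg)
      finally show ?thesis by simp
    qed
    finally show ?thesis .
  qed
  have n2: "(norm (\<Sum>t\<in>T. \<Sum>t'\<in>T. A t t'))\<^sup>2 \<le> (real (card T))\<^sup>2 *
       norm (\<Sum>s\<in>S. \<Sum>s'\<in>S. \<Sum>t\<in>T. \<Sum>t'\<in>T. c s t * cnj (c s t') * cnj (c s' t) * c s' t')"
  proof -
    have "(\<Sum>t\<in>T. \<Sum>t'\<in>T. A t t') = (\<Sum>p\<in>T \<times> T. A (fst p) (snd p))"
      by (simp add: sum.cartesian_product case_prod_unfold)
    hence "(norm (\<Sum>t\<in>T. \<Sum>t'\<in>T. A t t'))\<^sup>2 \<le> real (card (T \<times> T)) * (\<Sum>p\<in>T \<times> T. (norm (A (fst p) (snd p)))\<^sup>2)"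
      using norm_sum_sq_le by metis
    also have "(\<Sum>p\<in>T \<times> T. (norm (A (fst p) (snd p)))\<^sup>2) =
       norm (\<Sum>s\<in>S. \<Sum>s'\<in>S. \<Sum>t\<in>T. \<Sum>t'\<in>T. c s t * cnj (c s t') * cnj (c s' t) * c s' t')"
    proof -
      have "complex_of_real (\<Sum>p\<in>T \<times> T. (norm (A (fst p) (snd p)))\<^sup>2) = (\<Sum>p\<in>T \<times> T. A (fst p) (snd p) * cnj (A (fst p) (snd p)))"
        by (rule sum_norm_sq_complex)
      also have "\<dots> = (\<Sum>t\<in>T. \<Sum>t'\<in>T. A t t' * cnj (A t t'))"
        by (simp add: sum.cartesian_product case_prod_unfold)
      also have "\<dots> = (\<Sum>t\<in>T. \<Sum>t'\<in>T. \<Sum>s\<in>S. \<Sum>s'\<in>S. c s t * cnj (c s t') * cnj (c s' t) * c s' t')"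
        unfolding A_def cnj_sum sum_product
        by (intro sum.cong refl) (simp add: mult_ac)
      also have "\<dots> = (\<Sum>s\<in>S. \<Sum>s'\<in>S. \<Sum>t\<in>T. \<Sum>t'\<in>T. c s t * cnj (c s t') * cnj (c s' t) * c s' t')"
      proof -
        have "(\<Sum>t\<in>T. \<Sum>t'\<in>T. \<Sum>s\<in>S. \<Sum>s'\<in>S. c s t * cnj (c s t') * cnj (c s' t) * c s' t')
          = (\<Sum>t\<in>T. \<Sum>s\<in>S. \<Sum>s'\<in>S. \<Sum>t'\<in>T. c s t * cnj (c s t') * cnj (c s' t) * c s' t')"
          by (rule sum.cong[OF refl], rule sum3_swap)
        also have "\<dots> = (\<Sum>s\<in>S. \<Sum>s'\<in>S. \<Sum>t\<in>T. \<Sum>t'\<in>T. c s t * cnj (c s t') * cnj (c s' t) * c s' t')"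
          by (rule sum3_swap)
        finally show ?thesis .
      qed
      finally have "complex_of_real (\<Sum>p\<in>T \<times> T. (norm (A (fst p) (snd p)))\<^sup>2) =
         (\<Sum>s\<in>S. \<Sum>s'\<in>S. \<Sum>t\<in>T. \<Sum>t'\<in>T. c s t * cnj (c s t') * cnj (c s' t) * c s' t')" .
      hence "norm (\<Sum>s\<in>S. \<Sum>s'\<in>S. \<Sum>t\<in>T. \<Sum>t'\<in>T. c s t * cnj (c s t') * cnj (c s' t) * c s' t')
         = norm (complex_of_real (\<Sum>p\<in>T \<times> T. (norm (A (fst p) (snd p)))\<^sup>2))" by simp
      also have "\<dots> = (\<Sum>p\<in>T \<times> T. (norm (A (fst p) (snd p)))\<^sup>2)"
        unfolding norm_of_real by (rule abs_of_nonneg) (simp add: sum_nonneg)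
      finally show ?thesis by simp
    qed
    finally show ?thesis using fT by (simp add: card_cartesian_product power2_eq_square)
  qed
  have "(norm (\<Sum>s\<in>S. \<Sum>t\<in>T. c s t))^4 = ((norm (\<Sum>s\<in>S. \<Sum>t\<in>T. c s t))\<^sup>2)\<^sup>2" by simp
  also have "\<dots> \<le> (real (card S) * norm (\<Sum>t\<in>T. \<Sum>t'\<in>T. A t t'))\<^sup>2"
    by (rule power_mono[OF n1]) simp
  also have "\<dots> = (real (card S))\<^sup>2 * (norm (\<Sum>t\<in>T. \<Sum>t'\<in>T. A t t'))\<^sup>2" by (simp add: power_mult_distrib)
  also have "\<dots> \<le> (real (card S))\<^sup>2 * ((real (card T))\<^sup>2 *
       norm (\<Sum>s\<in>S. \<Sum>s'\<in>S. \<Sum>t\<in>T. \<Sum>t'\<in>T. c s t * cnj (c s t') * cnj (c s' t) * c s' t'))"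
    using n2 by (simp add: mult_left_mono)
  finally show ?thesis by (simp add: mult_ac)
qed




lemma sep_subset: "separated d A \<Longrightarrow> B \<subseteq> A \<Longrightarrow> separated d B"
  by (auto simp: separated_def)

lemma card_sep_int:
  assumes "finite A" "\<delta> > 0" "separated \<delta> A" "a \<le> b"
  shows "real (card (A \<inter> {a..b})) \<le> (b - a) / \<delta> + 1"
  using card_sep_interval[of "A \<inter> {a..b}" \<delta>] assms sep_subset[OF assms(3)] by auto

lemma abs_diff_sq: "\<bar>\<bar>a\<bar> - \<bar>b\<bar>\<bar> * (\<bar>a\<bar> + \<bar>b\<bar>) = \<bar>a\<^sup>2 - b\<^sup>2\<bar>" for a b :: real
proof -
  have "\<bar>\<bar>a\<bar> - \<bar>b\<bar>\<bar> * (\<bar>a\<bar> + \<bar>b\<bar>) = \<bar>(\<bar>a\<bar> - \<bar>b\<bar>) * (\<bar>a\<bar> + \<bar>b\<bar>)\<bar>" by (simp add: abs_mult)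
  also have "(\<bar>a\<bar> - \<bar>b\<bar>) * (\<bar>a\<bar> + \<bar>b\<bar>) = \<bar>a\<bar> * \<bar>a\<bar> - \<bar>b\<bar> * \<bar>b\<bar>" by (simp add: algebra_simps)
  also have "\<dots> = a\<^sup>2 - b\<^sup>2" by (simp add: power2_eq_square)
  finally show ?thesis .
qed

lemma quad_key:
  fixes x1 x2 x3 x4 \<rho> \<epsilon>1 \<epsilon>2 :: real
  assumes "x1 \<in> {0..\<rho>}" "x2 \<in> {0..\<rho>}" "x3 \<in> {0..\<rho>}" "x4 \<in> {0..\<rho>}"
    and "\<bar>(x1 - x2) - (x3 - x4)\<bar> \<le> \<epsilon>1" and "\<bar>(x1\<^sup>2 - x2\<^sup>2) - (x3\<^sup>2 - x4\<^sup>2)\<bar> \<le> \<epsilon>2"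
  shows "\<bar>(x2 - x3)\<^sup>2 - (x1 - x4)\<^sup>2\<bar> \<le> 2 * \<epsilon>2 + 4 * \<rho> * \<epsilon>1"
proof -
  have id: "(x1 - x4)\<^sup>2 - (x2 - x3)\<^sup>2 = 2 * ((x1\<^sup>2 - x2\<^sup>2) - (x3\<^sup>2 - x4\<^sup>2)) - ((x1 + x4) - (x2 + x3)) * ((x1 + x4) + (x2 + x3))"
    by (simp add: power2_eq_square algebra_simps)
  have "\<bar>((x1 + x4) - (x2 + x3)) * ((x1 + x4) + (x2 + x3))\<bar> \<le> 4 * \<rho> * \<epsilon>1"
  proof -
    have "\<bar>(x1 + x4) - (x2 + x3)\<bar> \<le> \<epsilon>1" using assms(5) by (simp add: algebra_simps)
    moreover have "\<bar>(x1 + x4) + (x2 + x3)\<bar> \<le> 4 * \<rho>" using assms(1-4) by auto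
    moreover have "0 \<le> \<epsilon>1" using assms(5) by (meson abs_ge_zero order_trans)
    ultimately have "\<bar>(x1 + x4) - (x2 + x3)\<bar> * \<bar>(x1 + x4) + (x2 + x3)\<bar> \<le> \<epsilon>1 * (4 * \<rho>)"
      by (rule mult_mono) auto
    thus ?thesis unfolding abs_mult by (simp add: mult_ac)
  qed
  hence "\<bar>(x1 - x4)\<^sup>2 - (x2 - x3)\<^sup>2\<bar> \<le> 2 * \<epsilon>2 + 4 * \<rho> * \<epsilon>1"
    unfolding id using assms(6) by (simp add: abs_le_iff; linarith)
  thus ?thesis by (simp add: abs_minus_commute)
qed

lemma energy_bound:
  fixes A :: "real set"
  assumes fA: "finite A" and subA: "A \<subseteq> {0..\<rho>}" and sep: "separated \<delta> A" and d0: "\<delta> > 0"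
    and e1: "0 \<le> \<epsilon>1" "2 * \<epsilon>1 < \<delta>" and e2: "0 \<le> \<epsilon>2" and th: "\<theta> > 0" and rho: "0 \<le> \<rho>"
  defines "\<eta> \<equiv> 2 * \<epsilon>2 + 4 * \<rho> * \<epsilon>1"
  shows "real (card {(i,i'). i \<in> A \<times> A \<and> i' \<in> A \<times> A \<and>
            \<bar>(fst i - snd i) - (fst i' - snd i')\<bar> \<le> \<epsilon>1 \<and>
            \<bar>((fst i)\<^sup>2 - (snd i)\<^sup>2) - ((fst i')\<^sup>2 - (snd i')\<^sup>2)\<bar> \<le> \<epsilon>2})
    \<le> (real (card A))\<^sup>2 * (2 * ((\<epsilon>1 + \<eta> / \<theta>) / \<delta> + 1))
      + real (card A) * (2 * \<theta> / \<delta> + 1) * ((\<epsilon>1 + \<theta> + sqrt \<eta>) / \<delta> + 1)"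
proof -
  define Q where "Q = {(i,i'). i \<in> A \<times> A \<and> i' \<in> A \<times> A \<and>
            \<bar>(fst i - snd i) - (fst i' - snd i')\<bar> \<le> \<epsilon>1 \<and>
            \<bar>((fst i)\<^sup>2 - (snd i)\<^sup>2) - ((fst i')\<^sup>2 - (snd i')\<^sup>2)\<bar> \<le> \<epsilon>2}"
  define X2 where "X2 p = {x2 \<in> A. \<exists>x3\<in>A. \<bar>(fst p - x2) - (x3 - snd p)\<bar> \<le> \<epsilon>1 \<and>
            \<bar>((fst p)\<^sup>2 - x2\<^sup>2) - (x3\<^sup>2 - (snd p)\<^sup>2)\<bar> \<le> \<epsilon>2}" for p
  define f where "f q = ((fst (fst q), snd (snd q)), snd (fst q))" for q :: "(real \<times> real) \<times> (real \<times> real)"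
  have \<eta>0: "\<eta> \<ge> 0" unfolding \<eta>_def using e1 e2 rho by simp
  have injf: "inj_on f Q"
  proof (rule inj_onI)
    fix q q' assume q: "q \<in> Q" and q': "q' \<in> Q" and fq: "f q = f q'"
    obtain x1 x2 x3 x4 where qq: "q = ((x1,x2),(x3,x4))" by (metis prod.collapse)
    obtain y1 y2 y3 y4 where qq': "q' = ((y1,y2),(y3,y4))" by (metis prod.collapse)
    have eq: "y1 = x1" "y4 = x4" "y2 = x2" using fq by (auto simp: f_def qq qq')
    have "\<bar>(x1 - x2) - (x3 - x4)\<bar> \<le> \<epsilon>1" "\<bar>(x1 - x2) - (y3 - x4)\<bar> \<le> \<epsilon>1"
      using q q' by (auto simp: Q_def qq qq' eq)
    hence "\<bar>x3 - y3\<bar> \<le> 2 * \<epsilon>1" by (simp add: abs_le_iff; linarith)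
    hence "\<bar>x3 - y3\<bar> < \<delta>" using e1 by linarith
    moreover have "x3 \<in> A" "y3 \<in> A" using q q' by (auto simp: Q_def qq qq')
    ultimately have "x3 = y3" using sep by (auto simp: separated_def not_le[symmetric])
    thus "q = q'" using qq qq' eq by simp
  qed
  have fimg: "f ` Q \<subseteq> (SIGMA p:A \<times> A. X2 p)"
    by (auto simp: f_def Q_def X2_def)
  have "card Q \<le> card (SIGMA p:A \<times> A. X2 p)"
    using card_inj_on_le[OF injf fimg] fA by (auto simp: X2_def)
  also have "\<dots> = (\<Sum>p\<in>A \<times> A. card (X2 p))"
    using fA by (intro card_SigmaI) (auto simp: X2_def)
  finally have cQ: "real (card Q) \<le> (\<Sum>p\<in>A \<times> A. real (card (X2 p)))"
    by (metis of_nat_le_iff of_nat_sum)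
  define bfar where "bfar = 2 * ((\<epsilon>1 + \<eta> / \<theta>) / \<delta> + 1)"
  define bnear where "bnear = (\<epsilon>1 + \<theta> + sqrt \<eta>) / \<delta> + 1"
  define Near where "Near = {p \<in> A \<times> A. \<bar>fst p - snd p\<bar> < \<theta>}"
  have fX2: "finite (X2 p)" for p using fA by (auto simp: X2_def)
  have sX2: "separated \<delta> (X2 p)" for p using sep by (auto simp: X2_def separated_def)
  have pt: "real (card (X2 p)) \<le> bfar + (if p \<in> Near then bnear else 0)" if pA: "p \<in> A \<times> A" for p
  proof -
    obtain x1 x4 where pp: "p = (x1, x4)" by (metis prod.collapse)
    have x14: "x1 \<in> {0..\<rho>}" "x4 \<in> {0..\<rho>}" using pA subA by (auto simp: pp)
    define D where "D = x1 - x4"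
    have key: "\<bar>(x2 - x3)\<^sup>2 - D\<^sup>2\<bar> \<le> \<eta> \<and> \<bar>(x2 + x3) - (x1 + x4)\<bar> \<le> \<epsilon>1"
      if "x2 \<in> A" "x3 \<in> A" "\<bar>(x1 - x2) - (x3 - x4)\<bar> \<le> \<epsilon>1" "\<bar>(x1\<^sup>2 - x2\<^sup>2) - (x3\<^sup>2 - x4\<^sup>2)\<bar> \<le> \<epsilon>2" for x2 x3
    proof
      show "\<bar>(x2 - x3)\<^sup>2 - D\<^sup>2\<bar> \<le> \<eta>" unfolding D_def \<eta>_def
        by (rule quad_key) (use that x14 subA in auto)
      show "\<bar>(x2 + x3) - (x1 + x4)\<bar> \<le> \<epsilon>1" using that(3) by (simp add: abs_le_iff; linarith)
    qed
    show ?thesis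
    proof (cases "p \<in> Near")
      case True
      define lo where "lo = (x1 + x4 - \<epsilon>1 - (\<theta> + sqrt \<eta>)) / 2"
      define hi where "hi = (x1 + x4 + \<epsilon>1 + (\<theta> + sqrt \<eta>)) / 2"
      have "X2 p \<subseteq> X2 p \<inter> {lo..hi}"
      proof
        fix x2 assume x2: "x2 \<in> X2 p"
        then obtain x3 where x3: "x3 \<in> A" "\<bar>(x1 - x2) - (x3 - x4)\<bar> \<le> \<epsilon>1"
           "\<bar>(x1\<^sup>2 - x2\<^sup>2) - (x3\<^sup>2 - x4\<^sup>2)\<bar> \<le> \<epsilon>2" and x2A: "x2 \<in> A"
          by (auto simp: X2_def pp)
        have k: "\<bar>(x2 - x3)\<^sup>2 - D\<^sup>2\<bar> \<le> \<eta>" "\<bar>(x2 + x3) - (x1 + x4)\<bar> \<le> \<epsilon>1"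
          using key[OF x2A x3] by auto
        have Dt: "\<bar>D\<bar> < \<theta>" using True by (auto simp: Near_def pp D_def)
        have a1: "(x2 - x3)\<^sup>2 \<le> D\<^sup>2 + \<eta>" using k(1) by (simp add: abs_le_iff)
        have a2: "D\<^sup>2 \<le> \<theta>\<^sup>2" using Dt th abs_le_square_iff[of D \<theta>] by simp
        have a3: "\<theta>\<^sup>2 + \<eta> \<le> (\<theta> + sqrt \<eta>)\<^sup>2" using th \<eta>0 by (simp add: power2_eq_square algebra_simps)
        have "(x2 - x3)\<^sup>2 \<le> (\<theta> + sqrt \<eta>)\<^sup>2" using a1 a2 a3 by linarith
        hence "\<bar>x2 - x3\<bar> \<le> \<bar>\<theta> + sqrt \<eta>\<bar>" using abs_le_square_iff by blast
        hence "\<bar>x2 - x3\<bar> \<le> \<theta> + sqrt \<eta>" using th \<eta>0 by simp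
        hence "lo \<le> x2 \<and> x2 \<le> hi" using k(2) unfolding lo_def hi_def by (simp add: abs_le_iff; linarith)
        thus "x2 \<in> X2 p \<inter> {lo..hi}" using x2 by auto
      qed
      hence "card (X2 p) \<le> card (X2 p \<inter> {lo..hi})" by (intro card_mono) (auto simp: fX2)
      also have "real (card (X2 p \<inter> {lo..hi})) \<le> (hi - lo) / \<delta> + 1"
        using card_sep_int[OF fX2 d0 sX2] e1 th \<eta>0 by (simp add: lo_def hi_def)
      also have "(hi - lo) / \<delta> + 1 = bnear" using d0 by (simp add: hi_def lo_def bnear_def field_simps)
      finally have "real (card (X2 p)) \<le> bnear" by simp
      moreover have "bfar \<ge> 0" unfolding bfar_def using e1 \<eta>0 th d0 by auto
      ultimately show ?thesis using True by simp
    next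
      case False
      hence Dt: "\<bar>D\<bar> \<ge> \<theta>" using pA by (auto simp: Near_def pp D_def)
      define w where "w = \<epsilon>1 + \<eta> / \<theta>"
      define lo1 where "lo1 = (x1 + x4 - \<epsilon>1 + \<bar>D\<bar> - \<eta> / \<theta>) / 2"
      define lo2 where "lo2 = (x1 + x4 - \<epsilon>1 - \<bar>D\<bar> - \<eta> / \<theta>) / 2"
      have "X2 p \<subseteq> (X2 p \<inter> {lo1..lo1 + w}) \<union> (X2 p \<inter> {lo2..lo2 + w})"
      proof
        fix x2 assume x2: "x2 \<in> X2 p"
        then obtain x3 where x3: "x3 \<in> A" "\<bar>(x1 - x2) - (x3 - x4)\<bar> \<le> \<epsilon>1"
           "\<bar>(x1\<^sup>2 - x2\<^sup>2) - (x3\<^sup>2 - x4\<^sup>2)\<bar> \<le> \<epsilon>2" and x2A: "x2 \<in> A"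
          by (auto simp: X2_def pp)
        have k: "\<bar>(x2 - x3)\<^sup>2 - D\<^sup>2\<bar> \<le> \<eta>" "\<bar>(x2 + x3) - (x1 + x4)\<bar> \<le> \<epsilon>1"
          using key[OF x2A x3] by auto
        have "\<bar>\<bar>x2 - x3\<bar> - \<bar>D\<bar>\<bar> * (\<bar>x2 - x3\<bar> + \<bar>D\<bar>) = \<bar>(x2 - x3)\<^sup>2 - D\<^sup>2\<bar>"
          by (rule abs_diff_sq)
        hence "\<bar>\<bar>x2 - x3\<bar> - \<bar>D\<bar>\<bar> * (\<bar>x2 - x3\<bar> + \<bar>D\<bar>) \<le> \<eta>" using k(1) by simp
        moreover have "\<bar>\<bar>x2 - x3\<bar> - \<bar>D\<bar>\<bar> * \<theta> \<le> \<bar>\<bar>x2 - x3\<bar> - \<bar>D\<bar>\<bar> * (\<bar>x2 - x3\<bar> + \<bar>D\<bar>)"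
          using Dt by (intro mult_left_mono) auto
        ultimately have "\<bar>\<bar>x2 - x3\<bar> - \<bar>D\<bar>\<bar> * \<theta> \<le> \<eta>" by linarith
        hence c: "\<bar>\<bar>x2 - x3\<bar> - \<bar>D\<bar>\<bar> \<le> \<eta> / \<theta>" using th by (simp add: field_simps)
        have c1: "\<bar>x2 - x3\<bar> \<le> \<bar>D\<bar> + \<eta> / \<theta>" "\<bar>D\<bar> - \<eta> / \<theta> \<le> \<bar>x2 - x3\<bar>"
          using c by (auto simp: abs_le_iff)
        have k2: "x2 + x3 \<le> x1 + x4 + \<epsilon>1" "x1 + x4 - \<epsilon>1 \<le> x2 + x3"
          using k(2) by (auto simp: abs_le_iff)
        have "(lo1 \<le> x2 \<and> x2 \<le> lo1 + w) \<or> (lo2 \<le> x2 \<and> x2 \<le> lo2 + w)"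
        proof (cases "x2 - x3 \<ge> 0")
          case True
          hence "\<bar>x2 - x3\<bar> = x2 - x3" by simp
          thus ?thesis using c1 k2 unfolding lo1_def w_def by (intro disjI1 conjI; simp add: field_simps; linarith)
        next
          case False
          hence "\<bar>x2 - x3\<bar> = x3 - x2" by simp
          thus ?thesis using c1 k2 unfolding lo2_def w_def by (intro disjI2 conjI; simp add: field_simps; linarith)
        qed
        thus "x2 \<in> (X2 p \<inter> {lo1..lo1 + w}) \<union> (X2 p \<inter> {lo2..lo2 + w})" using x2 by auto
      qed
      hence "card (X2 p) \<le> card ((X2 p \<inter> {lo1..lo1 + w}) \<union> (X2 p \<inter> {lo2..lo2 + w}))"
        by (intro card_mono) (auto simp: fX2)
      also have "\<dots> \<le> card (X2 p \<inter> {lo1..lo1 + w}) + card (X2 p \<inter> {lo2..lo2 + w})"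
        by (rule card_Un_le)
      finally have "real (card (X2 p)) \<le> real (card (X2 p \<inter> {lo1..lo1 + w})) + real (card (X2 p \<inter> {lo2..lo2 + w}))"
        by (metis of_nat_add of_nat_le_iff)
      also have "\<dots> \<le> (w / \<delta> + 1) + (w / \<delta> + 1)"
      proof -
        have w0: "0 \<le> w" unfolding w_def using e1 th \<eta>0 by simp
        show ?thesis
          using card_sep_int[OF fX2 d0 sX2, of lo1 "lo1 + w"] card_sep_int[OF fX2 d0 sX2, of lo2 "lo2 + w"] w0
          by (intro add_mono) simp_all
      qed
      also have "\<dots> = bfar" by (simp add: bfar_def w_def field_simps)
      finally show ?thesis using False by simp
    qed
  qed
  have cNear: "real (card Near) \<le> real (card A) * (2 * \<theta> / \<delta> + 1)"
  proof -
    have "Near = (SIGMA x1:A. A \<inter> {x1 - \<theta>..x1 + \<theta>} \<inter> {x4. \<bar>x1 - x4\<bar> < \<theta>})"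
      by (auto simp: Near_def)
    hence "card Near = (\<Sum>x1\<in>A. card (A \<inter> {x1 - \<theta>..x1 + \<theta>} \<inter> {x4. \<bar>x1 - x4\<bar> < \<theta>}))"
      using fA by (simp add: card_SigmaI)
    also have "\<dots> \<le> (\<Sum>x1\<in>A. card (A \<inter> {x1 - \<theta>..x1 + \<theta>}))"
      using fA by (intro sum_mono card_mono) auto
    finally have "real (card Near) \<le> (\<Sum>x1\<in>A. real (card (A \<inter> {x1 - \<theta>..x1 + \<theta>})))"
      by (metis of_nat_le_iff of_nat_sum)
    also have "\<dots> \<le> (\<Sum>x1\<in>A. 2 * \<theta> / \<delta> + 1)"
    proof (intro sum_mono)
      fix x1
      have "x1 + \<theta> - (x1 - \<theta>) = 2 * \<theta>" by simp
      thus "real (card (A \<inter> {x1 - \<theta>..x1 + \<theta>})) \<le> 2 * \<theta> / \<delta> + 1"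
        using card_sep_int[OF fA d0 sep, of "x1 - \<theta>" "x1 + \<theta>"] th by simp
    qed
    finally show ?thesis by simp
  qed
  have "real (card Q) \<le> (\<Sum>p\<in>A \<times> A. bfar + (if p \<in> Near then bnear else 0))"
    using cQ pt by (meson order_trans sum_mono)
  also have "\<dots> = real (card (A \<times> A)) * bfar + (\<Sum>p\<in>A \<times> A. if p \<in> Near then bnear else 0)"
    by (simp add: sum.distrib)
  also have "(\<Sum>p\<in>A \<times> A. if p \<in> Near then bnear else 0) = real (card Near) * bnear"
  proof -
    have "Near \<subseteq> A \<times> A" by (auto simp: Near_def)
    hence "A \<times> A \<inter> Near = Near" by auto
    thus ?thesis using fA by (simp add: sum.If_cases)
  qed
  also have "real (card Near) * bnear \<le> real (card A) * (2 * \<theta> / \<delta> + 1) * bnear"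
    using cNear by (rule mult_right_mono) (use e1 th \<eta>0 d0 in \<open>simp add: bnear_def\<close>)
  finally show ?thesis
    unfolding Q_def bfar_def bnear_def using fA by (simp add: card_cartesian_product power2_eq_square)
qed




lemma round_close:
  fixes u u' h A :: real and P :: nat
  assumes h: "h > 0" and u: "\<bar>u\<bar> \<le> A" and u': "\<bar>u'\<bar> \<le> A" and P: "2 * A / h + 1 < real P"
    and md: "round (u / h) mod int P = round (u' / h) mod int P"
  shows "\<bar>u - u'\<bar> \<le> h"
proof -
  define m where "m = round (u / h)"
  define m' where "m' = round (u' / h)"
  have r1: "\<bar>of_int m - u / h\<bar> \<le> 1/2" unfolding m_def by (rule of_int_round_abs_le)
  have r2: "\<bar>of_int m' - u' / h\<bar> \<le> 1/2" unfolding m'_def by (rule of_int_round_abs_le)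
  have q1: "\<bar>u / h\<bar> \<le> A / h" using u h by (simp add: abs_divide divide_right_mono)
  have q2: "\<bar>u' / h\<bar> \<le> A / h" using u' h by (simp add: abs_divide divide_right_mono)
  have "\<bar>of_int (m - m')\<bar> \<le> 2 * A / h + 1" using r1 r2 q1 q2 by (simp add: abs_le_iff; linarith)
  hence lt: "\<bar>of_int (m - m') :: real\<bar> < real P" using P by linarith
  have dv: "int P dvd (m - m')" using md by (simp add: m_def m'_def mod_eq_dvd_iff)
  have "m = m'"
  proof (rule ccontr)
    assume "m \<noteq> m'"
    hence "\<bar>int P\<bar> \<le> \<bar>m - m'\<bar>" using dv by (intro dvd_imp_le_int) auto
    hence "real P \<le> \<bar>of_int (m - m') :: real\<bar>" by (metis of_int_abs of_int_le_iff of_int_of_nat_eq abs_of_nat)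
    thus False using lt by simp
  qed
  hence "\<bar>u / h - u' / h\<bar> \<le> 1" using r1 r2 by (simp add: abs_le_iff; linarith)
  hence "\<bar>(u - u') / h\<bar> \<le> 1" by (simp add: diff_divide_distrib)
  thus ?thesis using h by (simp add: abs_divide field_simps)
qed

lemma rnd_err:
  fixes u v a b h g :: real
  assumes "\<bar>u - a\<bar> \<le> h / 2" "\<bar>v - b\<bar> \<le> g / 2"
  shows "\<bar>u * v - a * b\<bar> \<le> h / 2 * \<bar>v\<bar> + (\<bar>u\<bar> + h / 2) * (g / 2)"
proof -
  have "u * v - a * b = (u - a) * v + a * (v - b)" by (simp add: algebra_simps)
  hence "\<bar>u * v - a * b\<bar> \<le> \<bar>u - a\<bar> * \<bar>v\<bar> + \<bar>a\<bar> * \<bar>v - b\<bar>"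
    by (metis abs_mult abs_triangle_ineq)
  also have "\<dots> \<le> h / 2 * \<bar>v\<bar> + (\<bar>u\<bar> + h / 2) * (g / 2)"
  proof (rule add_mono)
    show "\<bar>u - a\<bar> * \<bar>v\<bar> \<le> h / 2 * \<bar>v\<bar>" using assms(1) by (rule mult_right_mono) simp
    have "\<bar>a\<bar> \<le> \<bar>u\<bar> + h / 2" using assms(1) by (simp add: abs_le_iff; linarith)
    thus "\<bar>a\<bar> * \<bar>v - b\<bar> \<le> (\<bar>u\<bar> + h / 2) * (g / 2)" using assms(2) by (intro mult_mono) auto
  qed
  finally show ?thesis .
qed

definition Eset :: "real set \<Rightarrow> real \<Rightarrow> real \<Rightarrow> ((real \<times> real) \<times> (real \<times> real)) set" where
  "Eset A e1 e2 = {(i,i'). i \<in> A \<times> A \<and> i' \<in> A \<times> A \<and>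
            \<bar>(fst i - snd i) - (fst i' - snd i')\<bar> \<le> e1 \<and>
            \<bar>((fst i)\<^sup>2 - (snd i)\<^sup>2) - ((fst i')\<^sup>2 - (snd i')\<^sup>2)\<bar> \<le> e2}"

lemma finite_Eset: "finite A \<Longrightarrow> finite (Eset A e1 e2)"
  by (rule finite_subset[of _ "(A \<times> A) \<times> (A \<times> A)"]) (auto simp: Eset_def)

lemma four_prod:
  "cis (R * (s * t + q * s\<^sup>2 * t\<^sup>2)) * cnj (cis (R * (s * t' + q * s\<^sup>2 * t'\<^sup>2))) *
   cnj (cis (R * (s' * t + q * s'\<^sup>2 * t\<^sup>2))) * cis (R * (s' * t' + q * s'\<^sup>2 * t'\<^sup>2))
   = cis ((s - s') * (R * (t - t')) + (s\<^sup>2 - s'\<^sup>2) * (R * q * (t\<^sup>2 - t'\<^sup>2)))"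
  unfolding cis_cnj cis_mult by (rule arg_cong[where f=cis]) (simp add: algebra_simps)




lemma nat_ceil_bounds:
  assumes "x \<ge> 0"
  shows "x + 2 \<le> real (nat \<lceil>x\<rceil> + 2)" "real (nat \<lceil>x\<rceil> + 2) \<le> x + 3"
proof -
  have "real (nat \<lceil>x\<rceil>) = of_int \<lceil>x\<rceil>" using assms by simp
  moreover have "of_int \<lceil>x\<rceil> < x + 1" using ceiling_correct[of x] by linarith
  moreover have "x \<le> of_int \<lceil>x\<rceil>" by (rule le_of_int_ceiling)
  ultimately show "x + 2 \<le> real (nat \<lceil>x\<rceil> + 2)" "real (nat \<lceil>x\<rceil> + 2) \<le> x + 3" by auto
qed

lemma coord_params:
  fixes \<sigma> X K :: real and P :: nat
  assumes \<sigma>: "\<sigma> > 0" and K: "K \<ge> 1" and X: "X * K \<ge> 1"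
    and P: "P = nat \<lceil>2 * pi * X * K\<^sup>2\<rceil> + 2"
  defines "g \<equiv> 1 / (\<sigma> * K)"
  defines "h \<equiv> 2 * pi / (real P * g)"
  shows "g > 0" "h > 0" "h * g = 2 * pi / real P" "h \<le> \<sigma> / (X * K)"
    "2 * \<sigma> / h + 1 < real P" "2 * (X / \<sigma>) / g + 1 < real P"
    "h / 2 * (X / \<sigma>) + (\<sigma> + h / 2) * (g / 2) \<le> 5 / (4 * K)"
    "real P \<le> 2 * pi * X * K\<^sup>2 + 3"
proof -
  have X0: "X > 0"
  proof (rule ccontr)
    assume "\<not> X > 0"
    hence "X * K \<le> 0" using K by (simp add: mult_nonpos_nonneg)
    thus False using X by linarith
  qed
  have Pge: "2 * pi * X * K\<^sup>2 + 2 \<le> real P" using nat_ceil_bounds(1)[of "2 * pi * X * K\<^sup>2"] X0 K by (simp add: P)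
  show "real P \<le> 2 * pi * X * K\<^sup>2 + 3" using nat_ceil_bounds(2)[of "2 * pi * X * K\<^sup>2"] X0 K by (simp add: P)
  have nn: "2 * pi * X * K\<^sup>2 \<ge> 0" using X0 by simp
  have P2': "real P \<ge> 2" using Pge nn by linarith
  hence P0: "real P > 0" by linarith
  have XK: "X * K\<^sup>2 \<ge> 1"
  proof -
    have "X * K \<le> X * K * K" using X K by (simp add: mult_le_cancel_left1)
    thus ?thesis using X by (simp add: power2_eq_square mult.assoc)
  qed
  show g0: "g > 0" unfolding g_def using \<sigma> K by simp
  show h0: "h > 0" unfolding h_def using g0 P0 by simp
  show hg: "h * g = 2 * pi / real P" unfolding h_def using g0 P0 by simp
  have hform: "h = 2 * pi * \<sigma> * K / real P" unfolding h_def g_def using \<sigma> K P0 by (simp add: field_simps)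
  show hle: "h \<le> \<sigma> / (X * K)"
  proof -
    have "2 * pi * \<sigma> * K * (X * K) \<le> \<sigma> * real P"
    proof -
      have "2 * pi * \<sigma> * K * (X * K) = \<sigma> * (2 * pi * X * K\<^sup>2)" by (simp add: power2_eq_square mult_ac)
      also have "\<dots> \<le> \<sigma> * real P" using Pge \<sigma> by (intro mult_left_mono) auto
      finally show ?thesis .
    qed
    thus ?thesis unfolding hform using P0 X0 K \<sigma> by (simp add: field_simps)
  qed
  have sh: "\<sigma> / h = real P / (2 * pi * K)" unfolding hform using \<sigma> K P0 by (simp add: field_simps)
  show "2 * \<sigma> / h + 1 < real P"
  proof -
    have "2 * \<sigma> / h = 2 * (\<sigma> / h)" by simp
    also have "\<dots> = real P / (pi * K)" unfolding sh using K by (simp add: field_simps)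
    also have "\<dots> \<le> real P / pi" using K P0 by (simp add: divide_left_mono mult_le_cancel_left1 frac_le)
    also have "\<dots> < real P / 2" by (rule divide_strict_left_mono) (use P0 pi_gt3 in auto)
    finally have "2 * \<sigma> / h < real P / 2" .
    moreover note P2'
    ultimately show ?thesis by linarith
  qed
  show "2 * (X / \<sigma>) / g + 1 < real P"
  proof -
    have "2 * (X / \<sigma>) / g = 2 * X * K" unfolding g_def using \<sigma> K by (simp add: field_simps)
    also have "\<dots> \<le> 2 * X * K\<^sup>2"
      using X0 K by (simp add: power2_eq_square mult_le_cancel_left1)
    also have "\<dots> \<le> 2 * pi * X * K\<^sup>2" using X0 K pi_gt3 by (intro mult_right_mono) auto
    finally show ?thesis using Pge by linarith
  qed
  show "h / 2 * (X / \<sigma>) + (\<sigma> + h / 2) * (g / 2) \<le> 5 / (4 * K)"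
  proof -
    have t1: "h / 2 * (X / \<sigma>) \<le> 1 / (2 * K)"
    proof -
      have "h / 2 * (X / \<sigma>) \<le> \<sigma> / (X * K) / 2 * (X / \<sigma>)"
        using hle X0 \<sigma> by (intro mult_right_mono) auto
      also have "\<dots> = 1 / (2 * K)" using X0 \<sigma> K by (simp add: field_simps)
      finally show ?thesis .
    qed
    have t2: "\<sigma> * (g / 2) = 1 / (2 * K)" unfolding g_def using \<sigma> K by (simp add: field_simps)
    have t3: "h / 2 * (g / 2) \<le> 1 / (4 * K)"
    proof -
      have "h / 2 * (g / 2) = pi / (2 * real P)" using hg by (simp add: field_simps)
      also have "\<dots> \<le> pi / (2 * (2 * pi * X * K\<^sup>2))"
        using Pge X0 K P0 by (intro divide_left_mono) (auto intro!: mult_pos_pos)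
      also have "\<dots> = 1 / (4 * (X * K\<^sup>2))" by (simp add: field_simps)
      also have "\<dots> \<le> 1 / (4 * K)"
      proof -
        have "1 * K \<le> (X * K) * K" using X K by (intro mult_right_mono) auto
        hence "K \<le> X * K\<^sup>2" by (simp add: power2_eq_square mult.assoc)
        thus ?thesis using K by (intro divide_left_mono) auto
      qed
      finally show ?thesis .
    qed
    have "h / 2 * (X / \<sigma>) + (\<sigma> + h / 2) * (g / 2) = h / 2 * (X / \<sigma>) + \<sigma> * (g / 2) + h / 2 * (g / 2)"
      by (simp add: algebra_simps)
    also have "\<dots> \<le> 1 / (2 * K) + 1 / (2 * K) + 1 / (4 * K)" using t1 t2 t3 by linarith
    also have "\<dots> = 5 / (4 * K)" using K by (simp add: field_simps)
    finally show ?thesis .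
  qed
qed




lemma sum_pairs: "(\<Sum>s\<in>S. \<Sum>s'\<in>S. G s s') = (\<Sum>i\<in>S \<times> S. G (fst i) (snd i))"
  by (simp add: sum.cartesian_product case_prod_unfold)

lemma main_Q:
  fixes S T :: "real set" and R \<rho> q K :: real
  assumes fS: "finite S" and fT: "finite T" and sS: "S \<subseteq> {0..\<rho>}" and sT: "T \<subseteq> {0..\<rho>}"
    and R: "R > 0" and \<rho>: "\<rho> > 0" and q: "q \<noteq> 0" and K: "K \<ge> 1"
    and X1: "R * \<rho>\<^sup>2 * K \<ge> 1" and X2: "R * \<bar>q\<bar> * \<rho>^4 * K \<ge> 1"
  shows "(norm (\<Sum>s\<in>S. \<Sum>t\<in>T. cis (R * (s * t + q * s\<^sup>2 * t\<^sup>2))))^4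
    \<le> (real (card S))\<^sup>2 * (real (card T))\<^sup>2 *
       (sqrt ((2 * pi * (R * \<rho>\<^sup>2) * K\<^sup>2 + 3) * (2 * pi * (R * \<bar>q\<bar> * \<rho>^4) * K\<^sup>2 + 3)
          * real (card (Eset S (1 / (R * \<rho> * K)) (1 / (R * \<bar>q\<bar> * \<rho>\<^sup>2 * K))))
          * real (card (Eset T (1 / (R * \<rho> * K)) (1 / (R * \<bar>q\<bar> * \<rho>\<^sup>2 * K)))))
        + (real (card S))\<^sup>2 * (real (card T))\<^sup>2 * (3 / K))"
proof -
  define \<epsilon>1 where "\<epsilon>1 = 1 / (R * \<rho> * K)"
  define \<epsilon>2 where "\<epsilon>2 = 1 / (R * \<bar>q\<bar> * \<rho>\<^sup>2 * K)"
  define c where "c s t = cis (R * (s * t + q * s\<^sup>2 * t\<^sup>2))" for s t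
  define u1 where "u1 i = fst i - snd i" for i :: "real \<times> real"
  define u2 where "u2 i = (fst i)\<^sup>2 - (snd i)\<^sup>2" for i :: "real \<times> real"
  define v1 where "v1 j = R * (fst j - snd j)" for j :: "real \<times> real"
  define v2 where "v2 j = R * q * ((fst j)\<^sup>2 - (snd j)\<^sup>2)" for j :: "real \<times> real"
  define P1 where "P1 = nat \<lceil>2 * pi * (R * \<rho>\<^sup>2) * K\<^sup>2\<rceil> + 2"
  define P2 where "P2 = nat \<lceil>2 * pi * (R * \<bar>q\<bar> * \<rho>^4) * K\<^sup>2\<rceil> + 2"
  define g1 where "g1 = 1 / (\<rho> * K)"
  define g2 where "g2 = 1 / (\<rho>\<^sup>2 * K)"
  define h1 where "h1 = 2 * pi / (real P1 * g1)"
  define h2 where "h2 = 2 * pi / (real P2 * g2)"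
  define m1 where "m1 i = round (u1 i / h1)" for i
  define m2 where "m2 i = round (u2 i / h2)" for i
  define n1 where "n1 j = round (v1 j / g1)" for j
  define n2 where "n2 j = round (v2 j / g2)" for j
  have \<rho>2: "\<rho>\<^sup>2 > 0" using \<rho> by simp
  note C1 = coord_params[OF \<rho> K X1 P1_def, folded g1_def, folded h1_def]
  note C2 = coord_params[OF \<rho>2 K X2 P2_def, folded g2_def, folded h2_def]
  have e1v: "(R * \<rho>\<^sup>2) / \<rho> = R * \<rho>" using \<rho> by (simp add: power2_eq_square)
  have e2v: "(R * \<bar>q\<bar> * \<rho>^4) / \<rho>\<^sup>2 = R * \<bar>q\<bar> * \<rho>\<^sup>2" using \<rho> by (simp add: power2_eq_square power4_eq_xxxx)
  have h1e: "h1 \<le> \<epsilon>1" using C1(4) \<rho> unfolding \<epsilon>1_def by (simp add: power2_eq_square)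
  have h2e: "h2 \<le> \<epsilon>2" using C2(4) \<rho> q unfolding \<epsilon>2_def by (simp add: power2_eq_square power4_eq_xxxx)
  have g1e: "g1 / R = \<epsilon>1" unfolding g1_def \<epsilon>1_def by (simp add: mult_ac)
  have g2e: "g2 / (R * \<bar>q\<bar>) = \<epsilon>2" unfolding g2_def \<epsilon>2_def by (simp add: mult_ac)
  have rU1: "\<bar>u1 i\<bar> \<le> \<rho>" if "i \<in> S \<times> S" for i
  proof -
    have "fst i \<in> {0..\<rho>}" "snd i \<in> {0..\<rho>}" using that sS by auto
    thus ?thesis by (simp add: u1_def abs_le_iff)
  qed
  have rU2: "\<bar>u2 i\<bar> \<le> \<rho>\<^sup>2" if "i \<in> S \<times> S" for i
  proof -
    have "fst i \<in> {0..\<rho>}" "snd i \<in> {0..\<rho>}" using that sS by auto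
    hence "(fst i)\<^sup>2 \<le> \<rho>\<^sup>2" "(snd i)\<^sup>2 \<le> \<rho>\<^sup>2" by (auto intro!: power_mono)
    thus ?thesis using zero_le_power2[of "fst i"] zero_le_power2[of "snd i"]
      unfolding u2_def abs_le_iff by (intro conjI; linarith)
  qed
  have rV1: "\<bar>v1 j\<bar> \<le> R * \<rho>" if "j \<in> T \<times> T" for j
  proof -
    have "fst j \<in> {0..\<rho>}" "snd j \<in> {0..\<rho>}" using that sT by auto
    hence "\<bar>fst j - snd j\<bar> \<le> \<rho>" by (simp add: abs_le_iff)
    thus ?thesis using R by (simp add: v1_def abs_mult)
  qed
  have rV2: "\<bar>v2 j\<bar> \<le> R * \<bar>q\<bar> * \<rho>\<^sup>2" if "j \<in> T \<times> T" for j
  proof -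
    have "fst j \<in> {0..\<rho>}" "snd j \<in> {0..\<rho>}" using that sT by auto
    hence "(fst j)\<^sup>2 \<le> \<rho>\<^sup>2" "(snd j)\<^sup>2 \<le> \<rho>\<^sup>2" by (auto intro!: power_mono)
    hence "\<bar>(fst j)\<^sup>2 - (snd j)\<^sup>2\<bar> \<le> \<rho>\<^sup>2" using zero_le_power2[of "fst j"] zero_le_power2[of "snd j"]
      unfolding abs_le_iff by (intro conjI; linarith)
    hence "\<bar>R * q\<bar> * \<bar>(fst j)\<^sup>2 - (snd j)\<^sup>2\<bar> \<le> \<bar>R * q\<bar> * \<rho>\<^sup>2" by (intro mult_left_mono) auto
    thus ?thesis using R by (simp add: v2_def abs_mult)
  qed
  define Q where "Q = (\<Sum>i\<in>S \<times> S. \<Sum>j\<in>T \<times> T. cis (u1 i * v1 j + u2 i * v2 j))"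
  define Qh where "Qh = (\<Sum>i\<in>S \<times> S. \<Sum>j\<in>T \<times> T. cis (2 * pi * (of_int (m1 i * n1 j) / real P1 + of_int (m2 i * n2 j) / real P2)))"
  have DCS: "(norm (\<Sum>s\<in>S. \<Sum>t\<in>T. c s t))^4 \<le> (real (card S))\<^sup>2 * (real (card T))\<^sup>2 * norm Q"
  proof -
    have "(\<Sum>s\<in>S. \<Sum>s'\<in>S. \<Sum>t\<in>T. \<Sum>t'\<in>T. c s t * cnj (c s t') * cnj (c s' t) * c s' t') = Q"
      unfolding Q_def sum_pairs[where S=S] sum_pairs[where S=T] c_def four_prod
      by (simp add: u1_def u2_def v1_def v2_def)
    thus ?thesis using double_CS[OF fS fT, of c] by simp
  qed
  have err: "norm (Q - Qh) \<le> real (card (S \<times> S)) * real (card (T \<times> T)) * (3 / K)"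
  proof -
    have pt: "norm (cis (u1 i * v1 j + u2 i * v2 j) - cis (2 * pi * (of_int (m1 i * n1 j) / real P1 + of_int (m2 i * n2 j) / real P2)))
        \<le> 3 / K" if i: "i \<in> S \<times> S" and j: "j \<in> T \<times> T" for i j
    proof -
      have ph: "2 * pi * (of_int (m1 i * n1 j) / real P1 + of_int (m2 i * n2 j) / real P2)
          = (h1 * of_int (m1 i)) * (g1 * of_int (n1 j)) + (h2 * of_int (m2 i)) * (g2 * of_int (n2 j))"
      proof -
        have "(h1 * of_int (m1 i)) * (g1 * of_int (n1 j)) + (h2 * of_int (m2 i)) * (g2 * of_int (n2 j))
            = (h1 * g1) * of_int (m1 i * n1 j) + (h2 * g2) * of_int (m2 i * n2 j)" by (simp add: algebra_simps)
        also have "\<dots> = 2 * pi / real P1 * of_int (m1 i * n1 j) + 2 * pi / real P2 * of_int (m2 i * n2 j)"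
          by (simp only: C1(3) C2(3))
        also have "\<dots> = 2 * pi * (of_int (m1 i * n1 j) / real P1 + of_int (m2 i * n2 j) / real P2)"
          by (simp add: algebra_simps)
        finally show ?thesis by simp
      qed
      have rd: "\<bar>x - a * of_int (round (x / a))\<bar> \<le> a / 2" if "a > 0" for x a :: real
      proof -
        have "\<bar>of_int (round (x / a)) - x / a\<bar> \<le> 1 / 2" by (rule of_int_round_abs_le)
        hence "a * \<bar>of_int (round (x / a)) - x / a\<bar> \<le> a * (1 / 2)" using that by (intro mult_left_mono) auto
        moreover have "a * \<bar>of_int (round (x / a)) - x / a\<bar> = \<bar>x - a * of_int (round (x / a))\<bar>"
        proof -
          have "a * \<bar>of_int (round (x / a)) - x / a\<bar> = \<bar>a * (of_int (round (x / a)) - x / a)\<bar>"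
            using that by (simp add: abs_mult)
          also have "a * (of_int (round (x / a)) - x / a) = a * of_int (round (x / a)) - x"
            using that by (simp add: algebra_simps)
          finally show ?thesis by (simp add: abs_minus_commute)
        qed
        ultimately show ?thesis by simp
      qed
      have a1: "\<bar>u1 i * v1 j - (h1 * of_int (m1 i)) * (g1 * of_int (n1 j))\<bar> \<le> 5 / (4 * K)"
      proof -
        have "\<bar>u1 i * v1 j - (h1 * of_int (m1 i)) * (g1 * of_int (n1 j))\<bar> \<le> h1 / 2 * \<bar>v1 j\<bar> + (\<bar>u1 i\<bar> + h1 / 2) * (g1 / 2)"
          by (rule rnd_err) (use rd C1(1,2) in \<open>auto simp: m1_def n1_def\<close>)
        also have "\<dots> \<le> h1 / 2 * ((R * \<rho>\<^sup>2) / \<rho>) + (\<rho> + h1 / 2) * (g1 / 2)"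
        proof -
          have vv: "\<bar>v1 j\<bar> \<le> (R * \<rho>\<^sup>2) / \<rho>" using rV1[OF j] e1v by simp
          show ?thesis by (rule add_mono[OF mult_left_mono[OF vv] mult_right_mono]) (use rU1[OF i] C1(1,2) in auto)
        qed
        finally show ?thesis using C1(7) by linarith
      qed
      have a2: "\<bar>u2 i * v2 j - (h2 * of_int (m2 i)) * (g2 * of_int (n2 j))\<bar> \<le> 5 / (4 * K)"
      proof -
        have "\<bar>u2 i * v2 j - (h2 * of_int (m2 i)) * (g2 * of_int (n2 j))\<bar> \<le> h2 / 2 * \<bar>v2 j\<bar> + (\<bar>u2 i\<bar> + h2 / 2) * (g2 / 2)"
          by (rule rnd_err) (use rd C2(1,2) in \<open>auto simp: m2_def n2_def\<close>)
        also have "\<dots> \<le> h2 / 2 * ((R * \<bar>q\<bar> * \<rho>^4) / \<rho>\<^sup>2) + (\<rho>\<^sup>2 + h2 / 2) * (g2 / 2)"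
        proof -
          have vv: "\<bar>v2 j\<bar> \<le> (R * \<bar>q\<bar> * \<rho>^4) / \<rho>\<^sup>2" using rV2[OF j] e2v by simp
          show ?thesis by (rule add_mono[OF mult_left_mono[OF vv] mult_right_mono]) (use rU2[OF i] C2(1,2) in auto)
        qed
        finally show ?thesis using C2(7) by linarith
      qed
      have "norm (cis (u1 i * v1 j + u2 i * v2 j) - cis (2 * pi * (of_int (m1 i * n1 j) / real P1 + of_int (m2 i * n2 j) / real P2)))
          \<le> \<bar>(u1 i * v1 j + u2 i * v2 j) - 2 * pi * (of_int (m1 i * n1 j) / real P1 + of_int (m2 i * n2 j) / real P2)\<bar>"
        by (rule norm_cis_diff)
      also have "\<dots> \<le> 5 / (4 * K) + 5 / (4 * K)" unfolding ph using a1 a2 by (simp add: abs_le_iff; linarith)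
      also have "\<dots> \<le> 3 / K" using K by (simp add: field_simps)
      finally show ?thesis .
    qed
    have "norm (Q - Qh) = norm (\<Sum>i\<in>S \<times> S. \<Sum>j\<in>T \<times> T. (cis (u1 i * v1 j + u2 i * v2 j) - cis (2 * pi * (of_int (m1 i * n1 j) / real P1 + of_int (m2 i * n2 j) / real P2))))"
      unfolding Q_def Qh_def by (simp add: sum_subtractf)
    also have "\<dots> \<le> (\<Sum>i\<in>S \<times> S. \<Sum>j\<in>T \<times> T. norm (cis (u1 i * v1 j + u2 i * v2 j) - cis (2 * pi * (of_int (m1 i * n1 j) / real P1 + of_int (m2 i * n2 j) / real P2))))"
      by (rule order_trans[OF norm_sum], rule sum_mono, rule norm_sum)
    also have "\<dots> \<le> (\<Sum>i\<in>S \<times> S. \<Sum>j\<in>T \<times> T. 3 / K)"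
      using pt by (intro sum_mono) auto
    also have "\<dots> = real (card (S \<times> S)) * real (card (T \<times> T)) * (3 / K)" by simp
    finally show ?thesis .
  qed
  have P10: "P1 > 0" "P2 > 0" by (simp_all add: P1_def P2_def)
  have LB: "(norm Qh)\<^sup>2 \<le> real (card {(i,i'). i \<in> S \<times> S \<and> i' \<in> S \<times> S \<and> m1 i mod int P1 = m1 i' mod int P1 \<and> m2 i mod int P2 = m2 i' mod int P2})
       * (real P1 * real P2)
       * real (card {(j,j'). j \<in> T \<times> T \<and> j' \<in> T \<times> T \<and> n1 j mod int P1 = n1 j' mod int P1 \<and> n2 j mod int P2 = n2 j' mod int P2})"
    unfolding Qh_def by (rule lattice_bound) (use fS fT P10 in auto)
  have CU: "card {(i,i'). i \<in> S \<times> S \<and> i' \<in> S \<times> S \<and> m1 i mod int P1 = m1 i' mod int P1 \<and> m2 i mod int P2 = m2 i' mod int P2}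
      \<le> card (Eset S \<epsilon>1 \<epsilon>2)"
  proof (rule card_mono[OF finite_Eset[OF fS]])
    show "{(i,i'). i \<in> S \<times> S \<and> i' \<in> S \<times> S \<and> m1 i mod int P1 = m1 i' mod int P1 \<and> m2 i mod int P2 = m2 i' mod int P2}
      \<subseteq> Eset S \<epsilon>1 \<epsilon>2"
    proof (intro subsetI)
      fix x assume "x \<in> {(i,i'). i \<in> S \<times> S \<and> i' \<in> S \<times> S \<and> m1 i mod int P1 = m1 i' mod int P1 \<and> m2 i mod int P2 = m2 i' mod int P2}"
      then obtain a b a' b' where xe: "x = ((a,b),(a',b'))" and H: "(a, b) \<in> S \<times> S" "(a', b') \<in> S \<times> S"
        "m1 (a, b) mod int P1 = m1 (a', b') mod int P1" "m2 (a, b) mod int P2 = m2 (a', b') mod int P2"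
        by auto
      have "\<bar>u1 (a,b) - u1 (a',b')\<bar> \<le> h1"
        by (rule round_close[OF C1(2) rU1[OF H(1)] rU1[OF H(2)] C1(5)]) (use H(3) in \<open>simp add: m1_def\<close>)
      moreover have "\<bar>u2 (a,b) - u2 (a',b')\<bar> \<le> h2"
        by (rule round_close[OF C2(2) rU2[OF H(1)] rU2[OF H(2)] C2(5)]) (use H(4) in \<open>simp add: m2_def\<close>)
      ultimately show "x \<in> Eset S \<epsilon>1 \<epsilon>2" unfolding xe
        using H h1e h2e by (auto simp: Eset_def u1_def u2_def)
    qed
  qed
  have CV: "card {(j,j'). j \<in> T \<times> T \<and> j' \<in> T \<times> T \<and> n1 j mod int P1 = n1 j' mod int P1 \<and> n2 j mod int P2 = n2 j' mod int P2}
      \<le> card (Eset T \<epsilon>1 \<epsilon>2)"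
  proof (rule card_mono[OF finite_Eset[OF fT]])
    show "{(j,j'). j \<in> T \<times> T \<and> j' \<in> T \<times> T \<and> n1 j mod int P1 = n1 j' mod int P1 \<and> n2 j mod int P2 = n2 j' mod int P2}
      \<subseteq> Eset T \<epsilon>1 \<epsilon>2"
    proof (intro subsetI)
      fix x assume "x \<in> {(i,i'). i \<in> T \<times> T \<and> i' \<in> T \<times> T \<and> n1 i mod int P1 = n1 i' mod int P1 \<and> n2 i mod int P2 = n2 i' mod int P2}"
      then obtain a b a' b' where xe: "x = ((a,b),(a',b'))" and H: "(a, b) \<in> T \<times> T" "(a', b') \<in> T \<times> T"
        "n1 (a, b) mod int P1 = n1 (a', b') mod int P1" "n2 (a, b) mod int P2 = n2 (a', b') mod int P2"
        by auto
      have rv1: "\<bar>v1 j\<bar> \<le> (R * \<rho>\<^sup>2) / \<rho>" if "j \<in> T \<times> T" for j using rV1[OF that] e1v by simp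
      have rv2: "\<bar>v2 j\<bar> \<le> (R * \<bar>q\<bar> * \<rho>^4) / \<rho>\<^sup>2" if "j \<in> T \<times> T" for j using rV2[OF that] e2v by simp
      have d1: "\<bar>v1 (a,b) - v1 (a',b')\<bar> \<le> g1"
        by (rule round_close[OF C1(1) rv1[OF H(1)] rv1[OF H(2)] C1(6)]) (use H(3) in \<open>simp add: n1_def\<close>)
      have d2: "\<bar>v2 (a,b) - v2 (a',b')\<bar> \<le> g2"
        by (rule round_close[OF C2(1) rv2[OF H(1)] rv2[OF H(2)] C2(6)]) (use H(4) in \<open>simp add: n2_def\<close>)
      have "\<bar>(a - b) - (a' - b')\<bar> \<le> \<epsilon>1"
      proof -
        have "v1 (a,b) - v1 (a',b') = R * ((a - b) - (a' - b'))" by (simp add: v1_def algebra_simps)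
        hence "R * \<bar>(a - b) - (a' - b')\<bar> \<le> g1" using d1 R by (simp add: abs_mult)
        thus ?thesis using R unfolding g1e[symmetric] by (simp add: field_simps)
      qed
      moreover have "\<bar>(a\<^sup>2 - b\<^sup>2) - (a'\<^sup>2 - b'\<^sup>2)\<bar> \<le> \<epsilon>2"
      proof -
        have "v2 (a,b) - v2 (a',b') = (R * q) * ((a\<^sup>2 - b\<^sup>2) - (a'\<^sup>2 - b'\<^sup>2))" by (simp add: v2_def algebra_simps)
        hence "(R * \<bar>q\<bar>) * \<bar>(a\<^sup>2 - b\<^sup>2) - (a'\<^sup>2 - b'\<^sup>2)\<bar> \<le> g2" using d2 R by (simp add: abs_mult)
        thus ?thesis using R q unfolding g2e[symmetric] by (simp add: field_simps)
      qed
      ultimately show "x \<in> Eset T \<epsilon>1 \<epsilon>2" unfolding xe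
        using H by (auto simp: Eset_def)
    qed
  qed
  have nQh: "norm Qh \<le> sqrt ((2 * pi * (R * \<rho>\<^sup>2) * K\<^sup>2 + 3) * (2 * pi * (R * \<bar>q\<bar> * \<rho>^4) * K\<^sup>2 + 3)
          * real (card (Eset S \<epsilon>1 \<epsilon>2)) * real (card (Eset T \<epsilon>1 \<epsilon>2)))"
  proof -
    have "(norm Qh)\<^sup>2 \<le> real (card (Eset S \<epsilon>1 \<epsilon>2)) * (real P1 * real P2) * real (card (Eset T \<epsilon>1 \<epsilon>2))"
    proof -
      have cu: "real (card {(i,i'). i \<in> S \<times> S \<and> i' \<in> S \<times> S \<and> m1 i mod int P1 = m1 i' mod int P1 \<and> m2 i mod int P2 = m2 i' mod int P2})
          \<le> real (card (Eset S \<epsilon>1 \<epsilon>2))" using CU by (rule of_nat_mono)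
      have cv: "real (card {(j,j'). j \<in> T \<times> T \<and> j' \<in> T \<times> T \<and> n1 j mod int P1 = n1 j' mod int P1 \<and> n2 j mod int P2 = n2 j' mod int P2})
          \<le> real (card (Eset T \<epsilon>1 \<epsilon>2))" using CV by (rule of_nat_mono)
      have "real (card {(i,i'). i \<in> S \<times> S \<and> i' \<in> S \<times> S \<and> m1 i mod int P1 = m1 i' mod int P1 \<and> m2 i mod int P2 = m2 i' mod int P2})
       * (real P1 * real P2)
       * real (card {(j,j'). j \<in> T \<times> T \<and> j' \<in> T \<times> T \<and> n1 j mod int P1 = n1 j' mod int P1 \<and> n2 j mod int P2 = n2 j' mod int P2})
        \<le> real (card (Eset S \<epsilon>1 \<epsilon>2)) * (real P1 * real P2) * real (card (Eset T \<epsilon>1 \<epsilon>2))"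
        by (rule mult_mono[OF mult_right_mono[OF cu] cv]) auto
      thus ?thesis using LB by linarith
    qed
    also have "\<dots> \<le> real (card (Eset S \<epsilon>1 \<epsilon>2)) * ((2 * pi * (R * \<rho>\<^sup>2) * K\<^sup>2 + 3) * (2 * pi * (R * \<bar>q\<bar> * \<rho>^4) * K\<^sup>2 + 3)) * real (card (Eset T \<epsilon>1 \<epsilon>2))"
    proof -
      have pp: "real P1 * real P2 \<le> (2 * pi * (R * \<rho>\<^sup>2) * K\<^sup>2 + 3) * (2 * pi * (R * \<bar>q\<bar> * \<rho>^4) * K\<^sup>2 + 3)"
        by (rule mult_mono[OF C1(8) C2(8)]) (use R \<rho> in auto)
      show ?thesis by (rule mult_right_mono[OF mult_left_mono[OF pp]]) auto
    qed
    finally have "(norm Qh)\<^sup>2 \<le> (2 * pi * (R * \<rho>\<^sup>2) * K\<^sup>2 + 3) * (2 * pi * (R * \<bar>q\<bar> * \<rho>^4) * K\<^sup>2 + 3)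
          * real (card (Eset S \<epsilon>1 \<epsilon>2)) * real (card (Eset T \<epsilon>1 \<epsilon>2))" by (simp add: mult_ac)
    thus ?thesis by (simp add: real_le_rsqrt)
  qed
  have "norm Q \<le> norm Qh + norm (Q - Qh)" by (metis norm_triangle_sub add.commute)
  also have "\<dots> \<le> sqrt ((2 * pi * (R * \<rho>\<^sup>2) * K\<^sup>2 + 3) * (2 * pi * (R * \<bar>q\<bar> * \<rho>^4) * K\<^sup>2 + 3)
          * real (card (Eset S \<epsilon>1 \<epsilon>2)) * real (card (Eset T \<epsilon>1 \<epsilon>2)))
        + (real (card S))\<^sup>2 * (real (card T))\<^sup>2 * (3 / K)"
    using nQh err fS fT by (simp add: card_cartesian_product power2_eq_square)
  finally have nQ: "norm Q \<le> sqrt ((2 * pi * (R * \<rho>\<^sup>2) * K\<^sup>2 + 3) * (2 * pi * (R * \<bar>q\<bar> * \<rho>^4) * K\<^sup>2 + 3)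
          * real (card (Eset S \<epsilon>1 \<epsilon>2)) * real (card (Eset T \<epsilon>1 \<epsilon>2)))
        + (real (card S))\<^sup>2 * (real (card T))\<^sup>2 * (3 / K)" .
  have fin: "(real (card S))\<^sup>2 * (real (card T))\<^sup>2 * norm Q \<le> (real (card S))\<^sup>2 * (real (card T))\<^sup>2 *
       (sqrt ((2 * pi * (R * \<rho>\<^sup>2) * K\<^sup>2 + 3) * (2 * pi * (R * \<bar>q\<bar> * \<rho>^4) * K\<^sup>2 + 3)
          * real (card (Eset S \<epsilon>1 \<epsilon>2)) * real (card (Eset T \<epsilon>1 \<epsilon>2)))
        + (real (card S))\<^sup>2 * (real (card T))\<^sup>2 * (3 / K))"
    by (rule mult_left_mono[OF nQ]) simp
  show ?thesis using order_trans[OF DCS[unfolded c_def] fin] unfolding \<epsilon>1_def \<epsilon>2_def .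
qed




definition "\<rho>f (R::real) = R powr (-1/5)"
definition "\<delta>f (R::real) = 1 / sqrt R"
definition "Kf (R::real) = R powr (1/100)"
definition "\<theta>f (R::real) = R powr (-4/15)"
definition "nbf R = \<rho>f R / \<delta>f R + 1"
definition "e1f R = 1 / (R * \<rho>f R * Kf R)"
definition "e2bf R = 5 * R powr (1/1000) / (R * (\<rho>f R)\<^sup>2 * Kf R)"
definition "\<eta>bf R = 2 * e2bf R + 4 * \<rho>f R * e1f R"
definition "Ebf R = (nbf R)\<^sup>2 * (2 * ((e1f R + \<eta>bf R / \<theta>f R) / \<delta>f R + 1))
   + nbf R * (2 * \<theta>f R / \<delta>f R + 1) * ((e1f R + \<theta>f R + sqrt (\<eta>bf R)) / \<delta>f R + 1)"
definition "B1f R = 2 * pi * (R * (\<rho>f R)\<^sup>2) * (Kf R)\<^sup>2 + 3"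
definition "B2bf C0 R = 2 * pi * (R * C0 * (\<rho>f R)^4) * (Kf R)\<^sup>2 + 3"
definition "Ff C0 R = (nbf R)^4 * (sqrt (B1f R * B2bf C0 R * (Ebf R)\<^sup>2) + (nbf R)^4 * (3 / Kf R))"

lemmas all_defs = \<rho>f_def \<delta>f_def Kf_def \<theta>f_def nbf_def e1f_def e2bf_def \<eta>bf_def Ebf_def B1f_def B2bf_def Ff_def

lemma asymp_main:
  fixes C0 :: real assumes "C0 > 0"
  shows "eventually (\<lambda>R. Ff C0 R < (R powr (3/5 - 1/1000) / C0) ^ 4) at_top"
  unfolding all_defs using assms by real_asymp

lemma asymp_side:
  shows "eventually (\<lambda>R::real. R \<ge> 1 \<and> Kf R \<ge> 1 \<and> R * (\<rho>f R)\<^sup>2 * Kf R \<ge> 1 \<and>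
     R * (R powr (-1/1000) / 5) * (\<rho>f R)^4 * Kf R \<ge> 1 \<and> 2 * e1f R < \<delta>f R \<and>
     (nbf R)\<^sup>2 \<le> 5 * R powr (3/5)) at_top"
  unfolding all_defs by (intro eventually_conj; real_asymp)




lemma Emono:
  fixes n n' \<eta> \<eta>' \<epsilon>1 \<theta> \<delta> :: real
  assumes "0 \<le> n" "n \<le> n'" "0 \<le> \<eta>" "\<eta> \<le> \<eta>'" "0 \<le> \<epsilon>1" "\<theta> > 0" "\<delta> > 0"
  shows "n\<^sup>2 * (2 * ((\<epsilon>1 + \<eta> / \<theta>) / \<delta> + 1)) + n * (2 * \<theta> / \<delta> + 1) * ((\<epsilon>1 + \<theta> + sqrt \<eta>) / \<delta> + 1)
    \<le> n'\<^sup>2 * (2 * ((\<epsilon>1 + \<eta>' / \<theta>) / \<delta> + 1)) + n' * (2 * \<theta> / \<delta> + 1) * ((\<epsilon>1 + \<theta> + sqrt \<eta>') / \<delta> + 1)"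
proof (rule add_mono)
  have a: "n\<^sup>2 \<le> n'\<^sup>2" using assms by (intro power_mono) auto
  have b: "(\<epsilon>1 + \<eta> / \<theta>) / \<delta> \<le> (\<epsilon>1 + \<eta>' / \<theta>) / \<delta>"
    using assms by (intro divide_right_mono add_left_mono) auto
  have b0: "0 \<le> (\<epsilon>1 + \<eta> / \<theta>) / \<delta>" using assms by auto
  show "n\<^sup>2 * (2 * ((\<epsilon>1 + \<eta> / \<theta>) / \<delta> + 1)) \<le> n'\<^sup>2 * (2 * ((\<epsilon>1 + \<eta>' / \<theta>) / \<delta> + 1))"
  proof -
    have b': "2 * ((\<epsilon>1 + \<eta> / \<theta>) / \<delta> + 1) \<le> 2 * ((\<epsilon>1 + \<eta>' / \<theta>) / \<delta> + 1)"
      by (rule mult_left_mono[OF add_right_mono[OF b]]) simp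
    have b0': "0 \<le> 2 * ((\<epsilon>1 + \<eta> / \<theta>) / \<delta> + 1)" by (rule mult_nonneg_nonneg) (use b0 in auto)
    show ?thesis by (rule mult_mono[OF a b' _ b0']) simp
  qed
  have c: "n * (2 * \<theta> / \<delta> + 1) \<le> n' * (2 * \<theta> / \<delta> + 1)"
    by (rule mult_right_mono) (use assms in auto)
  have d: "(\<epsilon>1 + \<theta> + sqrt \<eta>) / \<delta> + 1 \<le> (\<epsilon>1 + \<theta> + sqrt \<eta>') / \<delta> + 1"
    using assms by (intro add_right_mono divide_right_mono add_left_mono) auto
  have d0: "0 \<le> (\<epsilon>1 + \<theta> + sqrt \<eta>) / \<delta> + 1" using assms by auto
  have c0: "0 \<le> n' * (2 * \<theta> / \<delta> + 1)" using assms by auto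
  show "n * (2 * \<theta> / \<delta> + 1) * ((\<epsilon>1 + \<theta> + sqrt \<eta>) / \<delta> + 1) \<le> n' * (2 * \<theta> / \<delta> + 1) * ((\<epsilon>1 + \<theta> + sqrt \<eta>') / \<delta> + 1)"
    by (rule mult_mono[OF c d c0 d0])
qed

lemma case_large_q:
  fixes R q C0 :: real and S T :: "real set"
  assumes C0: "C0 > 0" and Rge: "R \<ge> 1" and Kge: "Kf R \<ge> 1" and X1: "R * (\<rho>f R)\<^sup>2 * Kf R \<ge> 1"
    and X2': "R * (R powr (-1/1000) / 5) * (\<rho>f R)^4 * Kf R \<ge> 1" and e1d: "2 * e1f R < \<delta>f R"
    and fin: "Ff C0 R < (R powr (3/5 - 1/1000) / C0) ^ 4"
    and q: "R powr (-1/1000) / 5 \<le> \<bar>q\<bar>" "\<bar>q\<bar> \<le> C0"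
    and fS: "finite S" and fT: "finite T" and sS: "S \<subseteq> {0 .. \<rho>f R}" and sT: "T \<subseteq> {0 .. \<rho>f R}"
    and sepS: "separated (\<delta>f R) S" and sepT: "separated (\<delta>f R) T"
  shows "norm (\<Sum>s\<in>S. \<Sum>t\<in>T. cis (R * (s * t + q * s\<^sup>2 * t\<^sup>2))) < R powr (3/5 - 1/1000) / \<bar>q\<bar>"
proof -
  define \<rho> where "\<rho> = \<rho>f R"
  define \<delta> where "\<delta> = \<delta>f R"
  define K where "K = Kf R"
  define \<theta> where "\<theta> = \<theta>f R"
  define e2 where "e2 = 1 / (R * \<bar>q\<bar> * \<rho>\<^sup>2 * K)"
  have R0: "R > 0" using Rge by simp
  have \<rho>0: "\<rho> > 0" unfolding \<rho>_def \<rho>f_def using R0 by simp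
  have \<delta>0: "\<delta> > 0" unfolding \<delta>_def \<delta>f_def using R0 by simp
  have \<theta>0: "\<theta> > 0" unfolding \<theta>_def \<theta>f_def using R0 by simp
  have K0: "K \<ge> 1" using Kge by (simp add: K_def)
  have "R powr (-1/1000) > 0" using R0 by simp
  hence qpos: "\<bar>q\<bar> > 0" using q(1) by linarith
  hence q0: "q \<noteq> 0" by simp
  have X2: "R * \<bar>q\<bar> * \<rho>^4 * K \<ge> 1"
  proof -
    have "R * (R powr (-1/1000) / 5) * \<rho>^4 * K \<le> R * \<bar>q\<bar> * \<rho>^4 * K"
      using q(1) R0 \<rho>0 K0 by (intro mult_right_mono mult_left_mono) auto
    thus ?thesis using X2' by (simp add: \<rho>_def K_def)
  qed
  have e1: "0 \<le> e1f R" "2 * e1f R < \<delta>" using e1d R0 \<rho>0 K0 by (auto simp: e1f_def \<delta>_def \<rho>_def K_def)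
  have e1eq: "1 / (R * \<rho> * K) = e1f R" by (simp add: e1f_def \<rho>_def K_def)
  have e20: "0 \<le> e2" unfolding e2_def using R0 qpos \<rho>0 K0 by simp
  have e2b: "e2 \<le> e2bf R"
  proof -
    have inv: "1 / \<bar>q\<bar> \<le> 5 * R powr (1/1000)"
    proof -
      have "1 = (R powr (-1/1000) / 5) * (5 * R powr (1/1000))" using R0 by (simp add: powr_minus field_simps)
      also have "\<dots> \<le> \<bar>q\<bar> * (5 * R powr (1/1000))" using q(1) by (intro mult_right_mono) auto
      finally show ?thesis using qpos by (simp add: field_simps)
    qed
    have "e2 = (1 / \<bar>q\<bar>) / (R * \<rho>\<^sup>2 * K)" unfolding e2_def by (simp add: field_simps)
    also have "\<dots> \<le> (5 * R powr (1/1000)) / (R * \<rho>\<^sup>2 * K)"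
      using inv R0 \<rho>0 K0 by (intro divide_right_mono) auto
    finally show ?thesis by (simp add: e2bf_def \<rho>_def K_def)
  qed
  define \<eta> where "\<eta> = 2 * e2 + 4 * \<rho> * e1f R"
  have \<eta>0: "0 \<le> \<eta>" unfolding \<eta>_def using e20 e1 \<rho>0 by simp
  have \<eta>b: "\<eta> \<le> \<eta>bf R" unfolding \<eta>_def \<eta>bf_def using e2b by (simp add: \<rho>_def)
  have cS: "real (card S) \<le> nbf R"
  proof -
    have H: "\<forall>a b. a \<le> b \<longrightarrow> S \<subseteq> {a..b} \<longrightarrow> real (card S) \<le> (b - a) / \<delta>f R + 1"
      using card_sep_interval[OF fS _ sepS] \<delta>0 unfolding \<delta>_def by blast
    have "real (card S) \<le> (\<rho>f R - 0) / \<delta>f R + 1" 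
      by (rule H[rule_format, of 0 "\<rho>f R"]) (use sS \<rho>0 in \<open>auto simp: \<rho>_def\<close>)
    thus ?thesis by (simp add: nbf_def)
  qed
  have cT: "real (card T) \<le> nbf R"
  proof -
    have H: "\<forall>a b. a \<le> b \<longrightarrow> T \<subseteq> {a..b} \<longrightarrow> real (card T) \<le> (b - a) / \<delta>f R + 1"
      using card_sep_interval[OF fT _ sepT] \<delta>0 unfolding \<delta>_def by blast
    have "real (card T) \<le> (\<rho>f R - 0) / \<delta>f R + 1" 
      by (rule H[rule_format, of 0 "\<rho>f R"]) (use sT \<rho>0 in \<open>auto simp: \<rho>_def\<close>)
    thus ?thesis by (simp add: nbf_def)
  qed
  have ES: "real (card (Eset S (e1f R) e2)) \<le> Ebf R"
  proof -
    have "real (card (Eset S (e1f R) e2)) \<le> (real (card S))\<^sup>2 * (2 * ((e1f R + \<eta> / \<theta>) / \<delta> + 1))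
      + real (card S) * (2 * \<theta> / \<delta> + 1) * ((e1f R + \<theta> + sqrt \<eta>) / \<delta> + 1)"
      unfolding Eset_def \<eta>_def
      by (rule energy_bound[OF fS _ sepS[folded \<delta>_def] \<delta>0 e1 e20 \<theta>0]) (use sS \<rho>0 in \<open>auto simp: \<rho>_def\<close>)
    also have "\<dots> \<le> Ebf R" unfolding Ebf_def \<theta>_def[symmetric] \<delta>_def[symmetric]
      by (rule Emono) (use cS \<eta>0 \<eta>b e1 \<theta>0 \<delta>0 in auto)
    finally show ?thesis .
  qed
  have ET: "real (card (Eset T (e1f R) e2)) \<le> Ebf R"
  proof -
    have "real (card (Eset T (e1f R) e2)) \<le> (real (card T))\<^sup>2 * (2 * ((e1f R + \<eta> / \<theta>) / \<delta> + 1))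
      + real (card T) * (2 * \<theta> / \<delta> + 1) * ((e1f R + \<theta> + sqrt \<eta>) / \<delta> + 1)"
      unfolding Eset_def \<eta>_def
      by (rule energy_bound[OF fT _ sepT[folded \<delta>_def] \<delta>0 e1 e20 \<theta>0]) (use sT \<rho>0 in \<open>auto simp: \<rho>_def\<close>)
    also have "\<dots> \<le> Ebf R" unfolding Ebf_def \<theta>_def[symmetric] \<delta>_def[symmetric]
      by (rule Emono) (use cT \<eta>0 \<eta>b e1 \<theta>0 \<delta>0 in auto)
    finally show ?thesis .
  qed
  have MQ: "(norm (\<Sum>s\<in>S. \<Sum>t\<in>T. cis (R * (s * t + q * s\<^sup>2 * t\<^sup>2))))^4
    \<le> (real (card S))\<^sup>2 * (real (card T))\<^sup>2 *
       (sqrt ((2 * pi * (R * \<rho>\<^sup>2) * K\<^sup>2 + 3) * (2 * pi * (R * \<bar>q\<bar> * \<rho>^4) * K\<^sup>2 + 3)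
          * real (card (Eset S (e1f R) e2)) * real (card (Eset T (e1f R) e2)))
        + (real (card S))\<^sup>2 * (real (card T))\<^sup>2 * (3 / K))"
    using main_Q[OF fS fT sS[folded \<rho>_def] sT[folded \<rho>_def] R0 \<rho>0 q0 K0 X1[folded \<rho>_def K_def] X2]
    unfolding e1eq e2_def[symmetric] .
  have n0: "0 \<le> nbf R" using cS by linarith
  have B2: "2 * pi * (R * \<bar>q\<bar> * \<rho>^4) * K\<^sup>2 + 3 \<le> B2bf C0 R"
    unfolding B2bf_def \<rho>_def[symmetric] K_def[symmetric] using q(2) R0 \<rho>0 K0
    by (intro add_right_mono mult_right_mono mult_left_mono) auto
  have EE: "real (card (Eset S (e1f R) e2)) * real (card (Eset T (e1f R) e2)) \<le> (Ebf R)\<^sup>2"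
    unfolding power2_eq_square by (rule mult_mono[OF ES ET]) (use ES in auto)
  have sq: "sqrt ((2 * pi * (R * \<rho>\<^sup>2) * K\<^sup>2 + 3) * (2 * pi * (R * \<bar>q\<bar> * \<rho>^4) * K\<^sup>2 + 3)
          * real (card (Eset S (e1f R) e2)) * real (card (Eset T (e1f R) e2)))
        \<le> sqrt (B1f R * B2bf C0 R * (Ebf R)\<^sup>2)"
  proof (rule real_sqrt_le_mono)
    have b1: "0 \<le> 2 * pi * (R * \<rho>\<^sup>2) * K\<^sup>2 + 3" using R0 by simp
    have ab: "(2 * pi * (R * \<rho>\<^sup>2) * K\<^sup>2 + 3) * (2 * pi * (R * \<bar>q\<bar> * \<rho>^4) * K\<^sup>2 + 3) \<le> B1f R * B2bf C0 R"
      unfolding B1f_def \<rho>_def[symmetric] K_def[symmetric] by (rule mult_left_mono[OF B2 b1])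
    have a0: "0 \<le> (2 * pi * (R * \<rho>\<^sup>2) * K\<^sup>2 + 3) * (2 * pi * (R * \<bar>q\<bar> * \<rho>^4) * K\<^sup>2 + 3)"
      using R0 by simp
    have "((2 * pi * (R * \<rho>\<^sup>2) * K\<^sup>2 + 3) * (2 * pi * (R * \<bar>q\<bar> * \<rho>^4) * K\<^sup>2 + 3))
          * (real (card (Eset S (e1f R) e2)) * real (card (Eset T (e1f R) e2))) \<le> (B1f R * B2bf C0 R) * (Ebf R)\<^sup>2"
      by (rule mult_mono[OF ab EE]) (use a0 ab in auto)
    thus "(2 * pi * (R * \<rho>\<^sup>2) * K\<^sup>2 + 3) * (2 * pi * (R * \<bar>q\<bar> * \<rho>^4) * K\<^sup>2 + 3)
          * real (card (Eset S (e1f R) e2)) * real (card (Eset T (e1f R) e2)) \<le> B1f R * B2bf C0 R * (Ebf R)\<^sup>2"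
      by (simp add: mult.assoc)
  qed
  have cc: "(real (card S))\<^sup>2 * (real (card T))\<^sup>2 \<le> (nbf R)^4"
  proof -
    have "(real (card S))\<^sup>2 \<le> (nbf R)\<^sup>2" "(real (card T))\<^sup>2 \<le> (nbf R)\<^sup>2"
      using cS cT by (auto intro!: power_mono)
    hence "(real (card S))\<^sup>2 * (real (card T))\<^sup>2 \<le> (nbf R)\<^sup>2 * (nbf R)\<^sup>2" by (intro mult_mono) auto
    thus ?thesis by (simp add: power4_eq_xxxx power2_eq_square mult_ac)
  qed
  have K3: "0 \<le> 3 / K" using K0 by simp
  have "(norm (\<Sum>s\<in>S. \<Sum>t\<in>T. cis (R * (s * t + q * s\<^sup>2 * t\<^sup>2))))^4 \<le> Ff C0 R"
  proof -
    have "(real (card S))\<^sup>2 * (real (card T))\<^sup>2 *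
       (sqrt ((2 * pi * (R * \<rho>\<^sup>2) * K\<^sup>2 + 3) * (2 * pi * (R * \<bar>q\<bar> * \<rho>^4) * K\<^sup>2 + 3)
          * real (card (Eset S (e1f R) e2)) * real (card (Eset T (e1f R) e2)))
        + (real (card S))\<^sup>2 * (real (card T))\<^sup>2 * (3 / K))
      \<le> (nbf R)^4 * (sqrt (B1f R * B2bf C0 R * (Ebf R)\<^sup>2) + (nbf R)^4 * (3 / K))"
      by (rule mult_mono[OF cc add_mono[OF sq mult_right_mono[OF cc K3]]])
         (use K3 R0 in \<open>auto intro!: add_nonneg_nonneg mult_nonneg_nonneg\<close>)
    thus ?thesis using MQ unfolding Ff_def K_def by linarith
  qed
  also note fin
  also have "(R powr (3/5 - 1/1000) / C0) ^ 4 \<le> (R powr (3/5 - 1/1000) / \<bar>q\<bar>) ^ 4"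
    using q qpos C0 R0 by (intro power_mono divide_left_mono) auto
  finally have "(norm (\<Sum>s\<in>S. \<Sum>t\<in>T. cis (R * (s * t + q * s\<^sup>2 * t\<^sup>2))))^4 < (R powr (3/5 - 1/1000) / \<bar>q\<bar>) ^ 4" .
  thus ?thesis using qpos R0 by (meson power_less_imp_less_base divide_nonneg_nonneg powr_ge_zero abs_ge_zero less_imp_le)
qed




lemma card_nb:
  assumes R0: "R > 0" and fS: "finite S" and sS: "S \<subseteq> {0 .. \<rho>f R}" and sepS: "separated (\<delta>f R) S"
  shows "real (card S) \<le> nbf R"
proof -
  have \<rho>0: "\<rho>f R > 0" unfolding \<rho>f_def using R0 by simp
  have \<delta>0: "\<delta>f R > 0" unfolding \<delta>f_def using R0 by simp
  have H: "\<forall>a b. a \<le> b \<longrightarrow> S \<subseteq> {a..b} \<longrightarrow> real (card S) \<le> (b - a) / \<delta>f R + 1"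
    using card_sep_interval[OF fS \<delta>0 sepS] by blast
  have "real (card S) \<le> (\<rho>f R - 0) / \<delta>f R + 1"
    by (rule H[rule_format, of 0 "\<rho>f R"]) (use sS \<rho>0 in auto)
  thus ?thesis by (simp add: nbf_def)
qed

theorem lemma5p1:
  shows "\<exists>\<kappa>1::real. \<kappa>1 > 0 \<and>
    (\<forall>C0::real. C0 > 0 \<longrightarrow>
      (\<exists>R0::real. \<forall>R::real. R \<ge> R0 \<longrightarrow>
        (\<forall>q::real. 0 < \<bar>q\<bar> \<and> \<bar>q\<bar> \<le> C0 \<longrightarrow>
          (\<forall>S T :: real set.
             finite S \<and> finite T \<and>
             S \<subseteq> {0 .. R powr (-1/5)} \<and> T \<subseteq> {0 .. R powr (-1/5)} \<and>
             separated (1 / sqrt R) S \<and> separated (1 / sqrt R) T \<longrightarrow>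
             norm (\<Sum>(s,t)\<in>S \<times> T. cis (R * (s * t + q * s^2 * t^2)))
               < R powr (3/5 - \<kappa>1) / \<bar>q\<bar>))))"
proof (rule exI[of _ "1/1000::real"], intro conjI allI impI)
  show "(1/1000::real) > 0" by simp
  fix C0 :: real assume C0: "C0 > 0"
  have ev: "eventually (\<lambda>R::real. (R \<ge> 1 \<and> Kf R \<ge> 1 \<and> R * (\<rho>f R)\<^sup>2 * Kf R \<ge> 1 \<and>
     R * (R powr (-1/1000) / 5) * (\<rho>f R)^4 * Kf R \<ge> 1 \<and> 2 * e1f R < \<delta>f R \<and>
     (nbf R)\<^sup>2 \<le> 5 * R powr (3/5)) \<and> Ff C0 R < (R powr (3/5 - 1/1000) / C0) ^ 4) at_top"
    by (rule eventually_conj[OF asymp_side asymp_main[OF C0]])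
  then obtain R0 where R0: "\<And>R. R \<ge> R0 \<Longrightarrow> (R \<ge> 1 \<and> Kf R \<ge> 1 \<and> R * (\<rho>f R)\<^sup>2 * Kf R \<ge> 1 \<and>
     R * (R powr (-1/1000) / 5) * (\<rho>f R)^4 * Kf R \<ge> 1 \<and> 2 * e1f R < \<delta>f R \<and>
     (nbf R)\<^sup>2 \<le> 5 * R powr (3/5)) \<and> Ff C0 R < (R powr (3/5 - 1/1000) / C0) ^ 4"
    by (auto simp: eventually_at_top_linorder)
  show "\<exists>R0::real. \<forall>R::real. R \<ge> R0 \<longrightarrow>
        (\<forall>q::real. 0 < \<bar>q\<bar> \<and> \<bar>q\<bar> \<le> C0 \<longrightarrow>
          (\<forall>S T :: real set.
             finite S \<and> finite T \<and>
             S \<subseteq> {0 .. R powr (-1/5)} \<and> T \<subseteq> {0 .. R powr (-1/5)} \<and>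
             separated (1 / sqrt R) S \<and> separated (1 / sqrt R) T \<longrightarrow>
             norm (\<Sum>(s,t)\<in>S \<times> T. cis (R * (s * t + q * s^2 * t^2)))
               < R powr (3/5 - 1/1000) / \<bar>q\<bar>))"
  proof (intro exI[of _ R0] allI impI)
    fix R q :: real and S T :: "real set"
    assume RR: "R \<ge> R0" and qq: "0 < \<bar>q\<bar> \<and> \<bar>q\<bar> \<le> C0"
      and ST: "finite S \<and> finite T \<and>
             S \<subseteq> {0 .. R powr (-1/5)} \<and> T \<subseteq> {0 .. R powr (-1/5)} \<and>
             separated (1 / sqrt R) S \<and> separated (1 / sqrt R) T"
    note H = R0[OF RR]
    have Rge: "R \<ge> 1" using H by simp
    hence Rpos: "R > 0" by simp
    have fS: "finite S" and fT: "finite T" using ST by auto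
    have sS: "S \<subseteq> {0 .. \<rho>f R}" and sT: "T \<subseteq> {0 .. \<rho>f R}" using ST by (auto simp: \<rho>f_def)
    have sepS: "separated (\<delta>f R) S" and sepT: "separated (\<delta>f R) T" using ST by (auto simp: \<delta>f_def)
    have sumeq: "(\<Sum>(s,t)\<in>S \<times> T. cis (R * (s * t + q * s^2 * t^2))) = (\<Sum>s\<in>S. \<Sum>t\<in>T. cis (R * (s * t + q * s\<^sup>2 * t\<^sup>2)))"
      by (rule sum.cartesian_product[symmetric])
    have main: "norm (\<Sum>s\<in>S. \<Sum>t\<in>T. cis (R * (s * t + q * s\<^sup>2 * t\<^sup>2))) < R powr (3/5 - 1/1000) / \<bar>q\<bar>"
    proof (cases "\<bar>q\<bar> < R powr (-1/1000) / 5")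
      case False
      show ?thesis
        by (rule case_large_q[OF C0 Rge _ _ _ _ _ _ _ fS fT sS sT sepS sepT]) (use H False qq in auto)
    next
      case True
      have cS: "real (card S) \<le> nbf R" by (rule card_nb[OF Rpos fS sS sepS])
      have cT: "real (card T) \<le> nbf R" by (rule card_nb[OF Rpos fT sT sepT])
      have "norm (\<Sum>s\<in>S. \<Sum>t\<in>T. cis (R * (s * t + q * s\<^sup>2 * t\<^sup>2))) \<le> (\<Sum>s\<in>S. \<Sum>t\<in>T. norm (cis (R * (s * t + q * s\<^sup>2 * t\<^sup>2))))"
        by (rule order_trans[OF norm_sum sum_mono[OF norm_sum]])
      also have "\<dots> = real (card S) * real (card T)" by simp
      also have "\<dots> \<le> nbf R * nbf R" by (rule mult_mono[OF cS cT]) (use cS in auto)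
      also have "\<dots> \<le> 5 * R powr (3/5)" using H by (simp add: power2_eq_square)
      also have "\<dots> < R powr (3/5 - 1/1000) / \<bar>q\<bar>"
      proof -
        have e: "5 * R powr (3/5) = R powr (3/5 - 1/1000) * (5 * R powr (1/1000))"
        proof -
          have "R powr (3/5 - 1/1000) * R powr (1/1000) = R powr (3/5)"
            by (simp add: powr_add[symmetric])
          thus ?thesis by simp
        qed
        have qs: "\<bar>q\<bar> * (5 * R powr (1/1000)) < 1"
        proof -
          have "\<bar>q\<bar> * (5 * R powr (1/1000)) < (R powr (-1/1000) / 5) * (5 * R powr (1/1000))"
            using True Rpos by (intro mult_strict_right_mono) auto
          also have "\<dots> = R powr (-1/1000) * R powr (1/1000)" by simp
          also have "\<dots> = 1" using Rpos by (simp add: powr_add[symmetric])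
          finally show ?thesis .
        qed
        have "5 * R powr (1/1000) < 1 / \<bar>q\<bar>" using qs qq by (simp add: field_simps)
        hence "R powr (3/5 - 1/1000) * (5 * R powr (1/1000)) < R powr (3/5 - 1/1000) * (1 / \<bar>q\<bar>)"
          using Rpos by (intro mult_strict_left_mono) auto
        thus ?thesis unfolding e by simp
      qed
      finally show ?thesis .
    qed
    show "norm (\<Sum>(s,t)\<in>S \<times> T. cis (R * (s * t + q * s^2 * t^2))) < R powr (3/5 - 1/1000) / \<bar>q\<bar>"
      using main sumeq by simp
  qed
qed


end
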